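(* For $\mathbf F\in\mathcal M_1^n$ and $\Lambda\in\mathcal Q_n$, we have $\mathcal C(\mathbf F)\subset\mathcal C(\Lambda\mathbf F)$.
   Context: $\mathcal M_1$ is the set of cdfs on $\mathbb{R}$ with finite mean. For $F,G\in\mathcal M_1$, $F\prec_{\mathrm{cx}}G$ (convex order) means $\int\phi\,\mathrm dF\le\int\phi\,\mathrm dG$ for all convex $\phi:\mathbb{R}\to\mathbb{R}$. The quantile function of a cdf $F$ is $F^{-1}(p)=\inf\{x: F(x)\ge p\}$, $p\in(0,1)$. For cdfs $F_1,\dots,F_n$, $F_1\oplus\dots\oplus F_n$ denotes the cdf with quantile function $F_1^{-1}+\dots+F_n^{-1}$. For $\mathbf F=(F_1,\dots,F_n)\in\mathcal M_1^n$, $\mathcal C(\mathbf F)=\{G\in\mathcal M_1: G\prec_{\mathrm{cx}}F_1\oplus\dots\oplus F_n\}$. $\mathcal Q_n$ is the set of $n\times n$ doubly stochastic matrices; for $\Lambda=(\Lambda_{ij})\in\mathcal Q_n$, $\Lambda\mathbf F$ is the tuple with $i$-th component $\sum_j\Lambda_{ij}F_j$. *)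

theory Defs
  imports "HOL-Analysis.Analysis"
begin

definition is_cdf :: "(real \<Rightarrow> real) \<Rightarrow> bool" where
  "is_cdf F \<longleftrightarrow> mono F \<and> (\<forall>a. continuous (at_right a) F)
     \<and> (F \<longlongrightarrow> 0) at_bot \<and> (F \<longlongrightarrow> 1) at_top"

abbreviation cdf_measure :: "(real \<Rightarrow> real) \<Rightarrow> real measure" where
  "cdf_measure F \<equiv> interval_measure F"

definition M1 :: "(real \<Rightarrow> real) set" where
  "M1 = {F. is_cdf F \<and> integrable (cdf_measure F) (\<lambda>x. x)}"

text \<open>Integral of phi w.r.t. dF, as an extended real (positive part minus negative part);
  well defined in (-inf, +inf] for convex phi and F with finite mean.\<close>
definition cdf_integral :: "(real \<Rightarrow> real) \<Rightarrow> (real \<Rightarrow> real) \<Rightarrow> ereal" where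
  "cdf_integral F \<phi> =
     enn2ereal (\<integral>\<^sup>+ x. ennreal (max (\<phi> x) 0) \<partial>cdf_measure F)
   - enn2ereal (\<integral>\<^sup>+ x. ennreal (max (- \<phi> x) 0) \<partial>cdf_measure F)"

definition cx_le :: "(real \<Rightarrow> real) \<Rightarrow> (real \<Rightarrow> real) \<Rightarrow> bool" where
  "cx_le F G \<longleftrightarrow> (\<forall>\<phi>. convex_on UNIV \<phi> \<longrightarrow> cdf_integral F \<phi> \<le> cdf_integral G \<phi>)"

definition quantile :: "(real \<Rightarrow> real) \<Rightarrow> real \<Rightarrow> real" where
  "quantile F p = Inf {x. F x \<ge> p}"

definition comon_sum :: "nat \<Rightarrow> (nat \<Rightarrow> real \<Rightarrow> real) \<Rightarrow> (real \<Rightarrow> real)" where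
  "comon_sum n F = (THE G. is_cdf G \<and>
      (\<forall>p\<in>{0<..<1}. quantile G p = (\<Sum>i<n. quantile (F i) p)))"

definition CF :: "nat \<Rightarrow> (nat \<Rightarrow> real \<Rightarrow> real) \<Rightarrow> (real \<Rightarrow> real) set" where
  "CF n F = {G \<in> M1. cx_le G (comon_sum n F)}"

definition doubly_stochastic :: "nat \<Rightarrow> (nat \<Rightarrow> nat \<Rightarrow> real) \<Rightarrow> bool" where
  "doubly_stochastic n L \<longleftrightarrow> (\<forall>i<n. \<forall>j<n. L i j \<ge> 0)
     \<and> (\<forall>i<n. (\<Sum>j<n. L i j) = 1) \<and> (\<forall>j<n. (\<Sum>i<n. L i j) = 1)"

definition mat_mix :: "nat \<Rightarrow> (nat \<Rightarrow> nat \<Rightarrow> real) \<Rightarrow> (nat \<Rightarrow> real \<Rightarrow> real) \<Rightarrow> (nat \<Rightarrow> real \<Rightarrow> real)" where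
  "mat_mix n L F = (\<lambda>i x. \<Sum>j<n. L i j * F j x)"

end

theory Submission
  imports Defs "HOL-Probability.Probability"
begin

lemma cdf_range:
  assumes "is_cdf G" shows "0 \<le> G x" "G x \<le> 1"
proof -
  have m: "mono G" and b: "(G \<longlongrightarrow> 0) at_bot" and t: "(G \<longlongrightarrow> 1) at_top"
    using assms by (auto simp: is_cdf_def)
  have e1: "\<forall>\<^sub>F y in at_bot. G y \<le> G x"
    unfolding eventually_at_bot_linorder by (rule exI[of _ x]) (auto intro: monoD[OF m])
  show "0 \<le> G x"
    by (rule tendsto_upperbound[OF b e1]) simp
  have e2: "\<forall>\<^sub>F y in at_top. G x \<le> G y"
    unfolding eventually_at_top_linorder by (rule exI[of _ x]) (auto intro: monoD[OF m])
  show "G x \<le> 1"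
    by (rule tendsto_lowerbound[OF t e2]) simp
qed

lemma galois:
  assumes G: "is_cdf G" and p: "0 < p" "p < 1"
  shows "p \<le> G x \<longleftrightarrow> quantile G p \<le> x"
proof -
  have m: "mono G" and b: "(G \<longlongrightarrow> 0) at_bot" and t: "(G \<longlongrightarrow> 1) at_top"
    and rc: "\<And>a. continuous (at_right a) G"
    using G by (auto simp: is_cdf_def)
  define S where "S = {x. p \<le> G x}"
  have "\<forall>\<^sub>F x in at_top. G x > p" using t p by (simp add: order_tendstoD)
  then obtain x1 where "p < G x1" by (auto simp: eventually_at_top_linorder)
  then have x0: "x1 \<in> S" by (simp add: S_def)
  then have Sne: "S \<noteq> {}" by blast
  have "\<forall>\<^sub>F x in at_bot. G x < p" using b p by (simp add: order_tendstoD)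
  then obtain b0 where b0: "\<And>x. x \<le> b0 \<Longrightarrow> G x < p" by (auto simp: eventually_at_bot_linorder)
  have lb: "b0 \<le> x" if "x \<in> S" for x
  proof (rule ccontr)
    assume "\<not> b0 \<le> x"
    then have "G x < p" using b0[of x] by simp
    then show False using that by (simp add: S_def)
  qed
  have bdd: "bdd_below S" by (rule bdd_belowI[of _ b0]) (rule lb)
  have q: "quantile G p = Inf S" by (simp add: quantile_def S_def)
  have ev: "\<forall>\<^sub>F y in at_right (Inf S). p \<le> G y"
  proof -
    have "p \<le> G y" if yS: "y > Inf S" for y
    proof -
      obtain s where s: "s \<in> S" "s < y" using cInf_lessD[OF Sne yS] by blast
      then have "G s \<le> G y" by (intro monoD[OF m]) simp
      then show ?thesis using s(1) by (simp add: S_def)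
    qed
    then show ?thesis unfolding eventually_at_right_field
      by (intro exI[of _ "Inf S + 1"]) simp
  qed
  have "(G \<longlongrightarrow> G (Inf S)) (at_right (Inf S))" using rc[of "Inf S"] by (simp add: continuous_within)
  then have "p \<le> G (Inf S)" by (rule tendsto_lowerbound[OF _ ev]) simp
  then have inS: "Inf S \<in> S" by (simp add: S_def)
  show ?thesis
  proof
    assume "p \<le> G x" then show "quantile G p \<le> x" unfolding q by (intro cInf_lower bdd) (simp add: S_def)
  next
    assume "quantile G p \<le> x"
    then have "G (Inf S) \<le> G x" unfolding q by (intro monoD[OF m])
    then show "p \<le> G x" using inS by (simp add: S_def)
  qed
qed

definition Qm :: "real measure" where "Qm = restrict_space lborel {0<..<1}"

lemma space_Qm[simp]: "space Qm = {0<..<1}" by (simp add: Qm_def)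
lemma sets_Qm: "sets Qm = sets (restrict_space borel {0<..<1::real})"
  unfolding Qm_def by (rule sets_restrict_space_cong) simp

lemma prob_Qm: "prob_space Qm"
  unfolding Qm_def by (rule prob_space_restrict_space) auto

lemma measure_Qm: "A \<subseteq> {0<..<1} \<Longrightarrow> A \<in> sets borel \<Longrightarrow> measure Qm A = measure lborel A"
  unfolding Qm_def by (rule measure_restrict_space) auto

lemma mono_on_meas_Qm: fixes g :: "real \<Rightarrow> real" shows "mono_on {0<..<1} g \<Longrightarrow> g \<in> borel_measurable Qm"
  unfolding measurable_cong_sets[OF sets_Qm refl] by (rule borel_measurable_mono_on_fnc)

lemma quantile_mono:
  assumes G: "is_cdf G" and "0 < p" "p \<le> p'" "p' < 1"
  shows "quantile G p \<le> quantile G p'"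
proof -
  have "p' \<le> G (quantile G p')" using galois[OF G, of p'] assms by simp
  then have "p \<le> G (quantile G p')" using assms by simp
  then show ?thesis using galois[OF G, of p] assms by simp
qed

lemma quantile_mono_on: "is_cdf G \<Longrightarrow> mono_on {0<..<1} (quantile G)"
  by (auto intro!: mono_onI quantile_mono)

lemma quantile_left:
  assumes G: "is_cdf G" and p: "0 < p" "p < 1"
  shows "(quantile G \<longlongrightarrow> quantile G p) (at_left p)"
proof (rule order_tendstoI)
  fix a assume a: "a < quantile G p"
  then have "G a < p" using galois[OF G p, of a] by simp
  then show "\<forall>\<^sub>F y in at_left p. a < quantile G y"
    unfolding eventually_at_left_field
    apply (intro exI[of _ "max (G a) 0"])
  proof (intro conjI allI impI)
    fix y assume y: "max (G a) 0 < y" "y < p"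
    then have "\<not> y \<le> G a" "0 < y" "y < 1" using p by auto
    then show "a < quantile G y" using galois[OF G, of y a] by auto
  qed (use \<open>G a < p\<close> p in auto)
next
  fix a assume a: "quantile G p < a"
  show "\<forall>\<^sub>F y in at_left p. quantile G y < a"
    unfolding eventually_at_left_field
    apply (intro exI[of _ 0])
  proof (intro conjI allI impI)
    fix y assume y: "0 < y" "y < p"
    then show "quantile G y < a" using quantile_mono[OF G, of y p] p a by linarith
  qed (use p in auto)
qed

lemma quantile_unique:
  assumes G: "is_cdf G" and G': "is_cdf G'" and eq: "\<forall>p\<in>{0<..<1}. quantile G p = quantile G' p"
  shows "G = G'"
proof
  fix x
  have *: False if A: "is_cdf A" "is_cdf B" "\<forall>p\<in>{0<..<1}. quantile A p = quantile B p" "A x < B x" for A B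
  proof -
    define p where "p = (A x + B x) / 2"
    have p: "0 < p" "p < 1" "p \<le> B x" "\<not> p \<le> A x"
      using cdf_range[OF A(1), of x] cdf_range[OF A(2), of x] A(4) by (auto simp: p_def)
    then have "quantile B p \<le> x" using galois[OF A(2) p(1,2)] by simp
    then have "quantile A p \<le> x" using A(3) p by simp
    then show False using galois[OF A(1) p(1,2)] p by simp
  qed
  show "G x = G' x"
    using *[OF G G' eq] *[OF G' G] eq by (metis linorder_neqE_linordered_idom)
qed

lemma cdf_construct:
  assumes mono: "mono_on {0<..<1} g" and lc: "\<And>p. 0 < p \<Longrightarrow> p < 1 \<Longrightarrow> (g \<longlongrightarrow> g p) (at_left p)"
  shows "\<exists>G. is_cdf G \<and> (\<forall>p\<in>{0<..<1}. quantile G p = g p)"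
proof -
  interpret Q: prob_space Qm by (rule prob_Qm)
  have gm: "g \<in> borel_measurable Qm" by (rule mono_on_meas_Qm[OF mono])
  define M where "M = distr Qm borel g"
  interpret M: real_distribution M unfolding M_def using gm by simp
  have cdfM: "cdf M x = measure lborel {u\<in>{0<..<1}. g u \<le> x}" for x
  proof -
    have "cdf M x = measure Qm (g -` {..x} \<inter> space Qm)"
      unfolding cdf_def M_def using gm by (simp add: measure_distr)
    also have "\<dots> = measure lborel {u\<in>{0<..<1}. g u \<le> x}"
    proof -
      have "g -` {..x} \<inter> space Qm \<in> sets Qm" using gm by measurable
      then have "g -` {..x} \<inter> space Qm \<in> sets borel"
        by (auto simp: sets_Qm sets_restrict_space_iff)
      then show ?thesis by (subst measure_Qm) (auto intro: arg_cong[where f="measure lborel"])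
    qed
    finally show ?thesis .
  qed
  have meas: "{u\<in>{0<..<1}. g u \<le> x} \<in> sets borel" for x
  proof -
    have "g -` {..x} \<inter> space Qm \<in> sets Qm" using gm by measurable
    moreover have "{u\<in>{0<..<1}. g u \<le> x} = g -` {..x} \<inter> space Qm" by auto
    ultimately show ?thesis by (auto simp: sets_Qm sets_restrict_space_iff)
  qed
  have key: "p \<le> cdf M x \<longleftrightarrow> g p \<le> x" if p: "0 < p" "p < 1" for p x
  proof
    assume "g p \<le> x"
    have "{0<..p} \<subseteq> {u\<in>{0<..<1}. g u \<le> x}"
    proof (rule subsetI)
      fix u assume "u \<in> {0<..p}"
      then have "g u \<le> g p" using p by (intro mono_onD[OF mono]) auto
      then show "u \<in> {u\<in>{0<..<1}. g u \<le> x}" using \<open>u \<in> {0<..p}\<close> p \<open>g p \<le> x\<close> by auto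
    qed
    moreover have "{u\<in>{0<..<1}. g u \<le> x} \<in> sets borel"
    proof -
      have "g -` {..x} \<inter> space Qm \<in> sets Qm" using gm by measurable
      moreover have "{u\<in>{0<..<1}. g u \<le> x} = g -` {..x} \<inter> space Qm" by auto
      ultimately show ?thesis by (auto simp: sets_Qm sets_restrict_space_iff)
    qed
    ultimately have "measure lborel {0<..p} \<le> measure lborel {u\<in>{0<..<1}. g u \<le> x}"
      by (intro measure_mono_fmeasurable) (auto simp: fmeasurable_def emeasure_lborel_Ioo
          intro: order.strict_trans1[OF emeasure_mono[of _ "{0<..<1}"]])
    then show "p \<le> cdf M x" using p by (simp add: cdfM)
  next
    assume "p \<le> cdf M x"
    show "g p \<le> x"
    proof (rule ccontr)
      assume "\<not> g p \<le> x"
      then have "x < g p" by simp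
      have "\<forall>\<^sub>F u in at_left p. x < g u" using lc[OF p] \<open>x < g p\<close> by (simp add: order_tendstoD)
      then obtain b where b: "b < p" "\<And>u. b < u \<Longrightarrow> u < p \<Longrightarrow> x < g u"
        unfolding eventually_at_left_field by blast
      define b' where "b' = max b 0"
      have "{u\<in>{0<..<1}. g u \<le> x} \<subseteq> {0<..b'}"
      proof (rule subsetI)
        fix u assume "u \<in> {u\<in>{0<..<1}. g u \<le> x}"
        then have u: "0 < u" "u < 1" "g u \<le> x" by auto
        have "u \<le> b'"
        proof (rule ccontr)
          assume "\<not> u \<le> b'"
          show False
          proof (cases "u < p")
            case True
            have "b < u" using \<open>\<not> u \<le> b'\<close> by (simp add: b'_def)
            then show ?thesis using b(2)[of u] u True by auto
          next
            case False then have "g p \<le> g u" using mono u p by (auto intro: mono_onD)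
            then show ?thesis using u \<open>x < g p\<close> by simp
          qed
        qed
        then show "u \<in> {0<..b'}" using u by simp
      qed
      then have "measure lborel {u\<in>{0<..<1}. g u \<le> x} \<le> measure lborel {0<..b'}"
        using meas[of x] by (intro measure_mono_fmeasurable) (auto simp: fmeasurable_def b'_def)
      then have "cdf M x \<le> b'" by (simp add: cdfM b'_def)
      then show False using \<open>p \<le> cdf M x\<close> b p by (simp add: b'_def)
    qed
  qed
  have "is_cdf (cdf M)"
    unfolding is_cdf_def using M.cdf_nondecreasing M.cdf_is_right_cont M.cdf_lim_at_bot M.cdf_lim_at_top_prob
    by (auto intro: monoI)
  moreover have "quantile (cdf M) p = g p" if "p \<in> {0<..<1}" for p
  proof -
    have "{x. p \<le> cdf M x} = {g p..}" using key that by auto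
    then show ?thesis by (simp add: quantile_def)
  qed
  ultimately show ?thesis by blast
qed

lemma comon_sum_char:
  assumes F: "\<forall>i<n. is_cdf (F i)"
  shows "is_cdf (comon_sum n F) \<and> (\<forall>p\<in>{0<..<1}. quantile (comon_sum n F) p = (\<Sum>i<n. quantile (F i) p))"
proof -
  let ?g = "\<lambda>p. \<Sum>i<n. quantile (F i) p"
  let ?P = "\<lambda>G. is_cdf G \<and> (\<forall>p\<in>{0<..<1}. quantile G p = ?g p)"
  have "mono_on {0<..<1} ?g"
    using F by (auto intro!: mono_onI sum_mono quantile_mono)
  moreover have "(?g \<longlongrightarrow> ?g p) (at_left p)" if "0 < p" "p < 1" for p
    using F that by (auto intro!: tendsto_sum quantile_left)
  ultimately obtain G where G: "?P G" using cdf_construct[of ?g] by blast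
  have "?P (THE G. ?P G)"
  proof (rule theI[of ?P G])
    show "?P G" by fact
    fix G' assume "?P G'" then show "G' = G" using G quantile_unique[of G' G] by auto
  qed
  then show ?thesis unfolding comon_sum_def .
qed

lemma quantile_transform:
  assumes G: "is_cdf G"
  shows "interval_measure G = distr Qm borel (quantile G)"
proof -
  interpret Q: prob_space Qm by (rule prob_Qm)
  have qm: "quantile G \<in> borel_measurable Qm" by (rule mono_on_meas_Qm[OF quantile_mono_on[OF G]])
  have m: "mono G" and b: "(G \<longlongrightarrow> 0) at_bot" and t: "(G \<longlongrightarrow> 1) at_top"
    and rc: "\<And>a. continuous (at_right a) G"
    using G by (auto simp: is_cdf_def)
  have r1: "real_distribution (interval_measure G)"
    by (rule real_distribution_interval_measure) (use m b t rc in \<open>auto dest: monoD\<close>)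
  have r2: "real_distribution (distr Qm borel (quantile G))" using qm by simp
  have "cdf (distr Qm borel (quantile G)) x = G x" for x
  proof -
    have "cdf (distr Qm borel (quantile G)) x = measure Qm (quantile G -` {..x} \<inter> space Qm)"
      unfolding cdf_def using qm by (simp add: measure_distr)
    also have "quantile G -` {..x} \<inter> space Qm = {p\<in>{0<..<1}. p \<le> G x}"
      by (auto simp: galois[OF G, symmetric])
    also have "measure Qm {p\<in>{0<..<1}. p \<le> G x} = G x"
    proof (cases "G x < 1")
      case True
      then have e: "{p\<in>{0<..<1}. p \<le> G x} = {0<..G x}" by auto
      have "measure Qm {0<..G x} = measure lborel {0<..G x}"
        by (rule measure_Qm) (use True in auto)
      then show ?thesis unfolding e using cdf_range[OF G, of x] by simp
    next
      case False
      then have e: "{p\<in>{0<..<1}. p \<le> G x} = {0<..<1}" using cdf_range[OF G, of x] by auto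
      have "measure Qm {0<..<1} = measure lborel {0<..<1::real}"
        by (rule measure_Qm) auto
      then show ?thesis unfolding e using False cdf_range[OF G, of x] by simp
    qed
    finally show ?thesis .
  qed
  then have "cdf (distr Qm borel (quantile G)) = G" by (rule ext)
  moreover have "cdf (interval_measure G) = G"
    by (rule cdf_interval_measure) (use m b rc in \<open>auto dest: monoD\<close>)
  ultimately have "cdf (interval_measure G) = cdf (distr Qm borel (quantile G))" by simp
  then show ?thesis by (rule cdf_unique[OF r1 r2])
qed

lemma quantile_meas: "is_cdf G \<Longrightarrow> quantile G \<in> borel_measurable Qm"
  by (rule mono_on_meas_Qm[OF quantile_mono_on])

lemma emeasure_Qm: "A \<subseteq> {0<..<1} \<Longrightarrow> A \<in> sets borel \<Longrightarrow> emeasure Qm A = emeasure lborel A"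
  unfolding Qm_def by (rule emeasure_restrict_space) auto

lemma slp:
  assumes G: "is_cdf G"
  shows "(\<integral>\<^sup>+p. ennreal (quantile G p - t) \<partial>Qm) = (\<integral>\<^sup>+y. indicator {t<..} y * ennreal (1 - G y) \<partial>lborel)"
proof -
  interpret Q: prob_space Qm by (rule prob_Qm)
  interpret P: pair_sigma_finite Qm lborel ..
  note qm[measurable] = quantile_meas[OF G]
  have 1: "ennreal (quantile G p - t) = (\<integral>\<^sup>+y. indicator {t<..<quantile G p} y \<partial>lborel)" for p
    by (cases "t \<le> quantile G p") (auto simp: ennreal_neg)
  have 2: "(\<integral>\<^sup>+p. indicator {t<..<quantile G p} y \<partial>Qm) = indicator {t<..} y * ennreal (1 - G y)" for y
  proof -
    have e: "{p \<in> space Qm. y < quantile G p} = {G y<..<1}"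
    proof (rule set_eqI)
      fix p show "p \<in> {p \<in> space Qm. y < quantile G p} \<longleftrightarrow> p \<in> {G y<..<1}"
        using galois[OF G, of p y] cdf_range[OF G, of y] by (cases "0 < p \<and> p < 1") auto
    qed
    have "(\<integral>\<^sup>+p. indicator {t<..<quantile G p} y \<partial>Qm)
        = (\<integral>\<^sup>+p. indicator {t<..} y * indicator {p \<in> space Qm. y < quantile G p} p \<partial>Qm)"
      by (intro nn_integral_cong) (auto split: split_indicator)
    also have "\<dots> = indicator {t<..} y * emeasure Qm {p \<in> space Qm. y < quantile G p}"
    proof -
      have ms: "{p \<in> space Qm. y < quantile G p} \<in> sets Qm" by measurable
      show ?thesis by (simp only: nn_integral_cmult[OF borel_measurable_indicator[OF ms]] nn_integral_indicator[OF ms])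
    qed
    also have "emeasure Qm {p \<in> space Qm. y < quantile G p} = ennreal (1 - G y)"
      unfolding e using cdf_range[OF G, of y] by (subst emeasure_Qm) auto
    finally show ?thesis .
  qed
  have "(\<integral>\<^sup>+p. ennreal (quantile G p - t) \<partial>Qm) = (\<integral>\<^sup>+p. \<integral>\<^sup>+y. indicator {t<..<quantile G p} y \<partial>lborel \<partial>Qm)"
    by (intro nn_integral_cong) (rule 1)
  also have "\<dots> = (\<integral>\<^sup>+y. \<integral>\<^sup>+p. indicator {t<..<quantile G p} y \<partial>Qm \<partial>lborel)"
  proof (rule P.Fubini'[symmetric])
    have "(\<lambda>(p, y). indicator {t<..<quantile G p} y :: ennreal)
        = (\<lambda>x. if t < snd x \<and> snd x < quantile G (fst x) then 1 else 0)"
      by (auto simp: fun_eq_iff split: split_indicator)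
    moreover have "(\<lambda>x. if t < snd x \<and> snd x < quantile G (fst x) then 1 else 0 :: ennreal) \<in> borel_measurable (Qm \<Otimes>\<^sub>M lborel)"
      by measurable
    ultimately show "(\<lambda>(p, y). indicator {t<..<quantile G p} y :: ennreal) \<in> borel_measurable (Qm \<Otimes>\<^sub>M lborel)"
      by simp
  qed
  also have "\<dots> = (\<integral>\<^sup>+y. indicator {t<..} y * ennreal (1 - G y) \<partial>lborel)"
    by (intro nn_integral_cong) (rule 2)
  finally show ?thesis .
qed

lemma sln:
  assumes G: "is_cdf G"
  shows "(\<integral>\<^sup>+p. ennreal (t - quantile G p) \<partial>Qm) = (\<integral>\<^sup>+y. indicator {..<t} y * ennreal (G y) \<partial>lborel)"
proof -
  interpret Q: prob_space Qm by (rule prob_Qm)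
  interpret P: pair_sigma_finite Qm lborel ..
  note qm[measurable] = quantile_meas[OF G]
  have 1: "ennreal (t - quantile G p) = (\<integral>\<^sup>+y. indicator {quantile G p..<t} y \<partial>lborel)" for p
    by (cases "quantile G p \<le> t") (auto simp: ennreal_neg)
  have 2: "(\<integral>\<^sup>+p. indicator {quantile G p..<t} y \<partial>Qm) = indicator {..<t} y * ennreal (G y)" for y
  proof -
    have e: "{p \<in> space Qm. quantile G p \<le> y} = {p\<in>{0<..<1}. p \<le> G y}"
      using galois[OF G, of _ y] by auto
    have "(\<integral>\<^sup>+p. indicator {quantile G p..<t} y \<partial>Qm)
        = (\<integral>\<^sup>+p. indicator {..<t} y * indicator {p \<in> space Qm. quantile G p \<le> y} p \<partial>Qm)"
      by (intro nn_integral_cong) (auto split: split_indicator)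
    also have "\<dots> = indicator {..<t} y * emeasure Qm {p \<in> space Qm. quantile G p \<le> y}"
    proof -
      have ms: "{p \<in> space Qm. quantile G p \<le> y} \<in> sets Qm" by measurable
      show ?thesis by (simp only: nn_integral_cmult[OF borel_measurable_indicator[OF ms]] nn_integral_indicator[OF ms])
    qed
    also have "emeasure Qm {p \<in> space Qm. quantile G p \<le> y} = ennreal (G y)"
      unfolding e
    proof (cases "G y < 1")
      case True
      then have e2: "{p\<in>{0<..<1}. p \<le> G y} = {0<..G y}" by auto
      show "emeasure Qm {p\<in>{0<..<1}. p \<le> G y} = ennreal (G y)"
        unfolding e2 using True cdf_range[OF G, of y] by (subst emeasure_Qm) auto
    next
      case False
      then have e2: "{p\<in>{0<..<1}. p \<le> G y} = {0<..<1}" using cdf_range[OF G, of y] by auto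
      show "emeasure Qm {p\<in>{0<..<1}. p \<le> G y} = ennreal (G y)"
        unfolding e2 using False cdf_range[OF G, of y] by (subst emeasure_Qm) auto
    qed
    finally show ?thesis .
  qed
  have "(\<integral>\<^sup>+p. ennreal (t - quantile G p) \<partial>Qm) = (\<integral>\<^sup>+p. \<integral>\<^sup>+y. indicator {quantile G p..<t} y \<partial>lborel \<partial>Qm)"
    by (intro nn_integral_cong) (rule 1)
  also have "\<dots> = (\<integral>\<^sup>+y. \<integral>\<^sup>+p. indicator {quantile G p..<t} y \<partial>Qm \<partial>lborel)"
  proof (rule P.Fubini'[symmetric])
    have "(\<lambda>(p, y). indicator {quantile G p..<t} y :: ennreal)
        = (\<lambda>x. if quantile G (fst x) \<le> snd x \<and> snd x < t then 1 else 0)"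
      by (auto simp: fun_eq_iff split: split_indicator)
    moreover have "(\<lambda>x. if quantile G (fst x) \<le> snd x \<and> snd x < t then 1 else 0 :: ennreal) \<in> borel_measurable (Qm \<Otimes>\<^sub>M lborel)"
      by measurable
    ultimately show "(\<lambda>(p, y). indicator {quantile G p..<t} y :: ennreal) \<in> borel_measurable (Qm \<Otimes>\<^sub>M lborel)"
      by simp
  qed
  also have "\<dots> = (\<integral>\<^sup>+y. indicator {..<t} y * ennreal (G y) \<partial>lborel)"
    by (intro nn_integral_cong) (rule 2)
  finally show ?thesis .
qed

lemma quantile_integrable: assumes "F \<in> M1" shows "integrable Qm (quantile F)"
proof -
  have G: "is_cdf F" and i: "integrable (interval_measure F) (\<lambda>x. x)" using assms by (auto simp: M1_def)
  show ?thesis using i unfolding quantile_transform[OF G]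
    by (subst (asm) integrable_distr_eq[OF quantile_meas[OF G]]) auto
qed

lemma mix_cdf:
  assumes F: "\<forall>j<n. is_cdf (F j)" and L: "\<forall>j<n. L j \<ge> 0" "(\<Sum>j<n. L j) = 1"
  shows "is_cdf (\<lambda>x. \<Sum>j<n. L j * F j x)"
  unfolding is_cdf_def
proof (intro conjI allI)
  show "mono (\<lambda>x. \<Sum>j<n. L j * F j x)"
    using F L by (auto intro!: monoI sum_mono mult_left_mono dest: monoD simp: is_cdf_def)
  fix a show "continuous (at_right a) (\<lambda>x. \<Sum>j<n. L j * F j x)"
    using F by (auto intro!: continuous_sum continuous_mult continuous_const simp: is_cdf_def)
next
  have "((\<lambda>x. \<Sum>j<n. L j * F j x) \<longlongrightarrow> (\<Sum>j<n. L j * 0)) at_bot"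
    using F by (intro tendsto_sum tendsto_mult_left) (simp add: is_cdf_def)
  then show "((\<lambda>x. \<Sum>j<n. L j * F j x) \<longlongrightarrow> 0) at_bot" by simp
  have "((\<lambda>x. \<Sum>j<n. L j * F j x) \<longlongrightarrow> (\<Sum>j<n. L j * 1)) at_top"
    using F by (intro tendsto_sum tendsto_mult_left) (simp add: is_cdf_def)
  then show "((\<lambda>x. \<Sum>j<n. L j * F j x) \<longlongrightarrow> 1) at_top" using L by simp
qed

lemma cdf_meas: "is_cdf G \<Longrightarrow> G \<in> borel_measurable borel"
  by (rule borel_measurable_mono) (simp add: is_cdf_def)

lemma mix_slp:
  assumes F: "\<forall>j<n. is_cdf (F j)" and L: "\<forall>j<n. L j \<ge> 0" "(\<Sum>j<n. L j) = 1"
  shows "(\<integral>\<^sup>+p. ennreal (quantile (\<lambda>x. \<Sum>j<n. L j * F j x) p - t) \<partial>Qm)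
       = (\<Sum>j<n. ennreal (L j) * (\<integral>\<^sup>+p. ennreal (quantile (F j) p - t) \<partial>Qm))"
proof -
  have H: "is_cdf (\<lambda>x. \<Sum>j<n. L j * F j x)" by (rule mix_cdf[OF F L])
  have "(\<integral>\<^sup>+p. ennreal (quantile (\<lambda>x. \<Sum>j<n. L j * F j x) p - t) \<partial>Qm)
      = (\<integral>\<^sup>+y. indicator {t<..} y * ennreal (1 - (\<Sum>j<n. L j * F j y)) \<partial>lborel)"
    by (rule slp[OF H])
  also have "\<dots> = (\<integral>\<^sup>+y. (\<Sum>j<n. ennreal (L j) * (indicator {t<..} y * ennreal (1 - F j y))) \<partial>lborel)"
  proof (intro nn_integral_cong)
    fix y
    have "1 - (\<Sum>j<n. L j * F j y) = (\<Sum>j<n. L j * (1 - F j y))"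
      using L by (simp add: sum_subtractf right_diff_distrib)
    moreover have "ennreal (\<Sum>j<n. L j * (1 - F j y)) = (\<Sum>j<n. ennreal (L j) * ennreal (1 - F j y))"
      using L F cdf_range by (subst sum_ennreal[symmetric]) (auto simp: ennreal_mult)
    ultimately show "indicator {t<..} y * ennreal (1 - (\<Sum>j<n. L j * F j y))
        = (\<Sum>j<n. ennreal (L j) * (indicator {t<..} y * ennreal (1 - F j y)))"
      by (simp add: sum_distrib_left mult.left_commute)
  qed
  also have "\<dots> = (\<Sum>j<n. ennreal (L j) * (\<integral>\<^sup>+y. indicator {t<..} y * ennreal (1 - F j y) \<partial>lborel))"
  proof -
    have mF: "(\<lambda>y. indicator {t<..} y * ennreal (1 - F j y)) \<in> borel_measurable borel"
      "(\<lambda>y. ennreal (L j) * (indicator {t<..} y * ennreal (1 - F j y))) \<in> borel_measurable borel" if "j < n" for j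
    proof -
      have [measurable]: "F j \<in> borel_measurable borel" using F that cdf_meas by auto
      show "(\<lambda>y. indicator {t<..} y * ennreal (1 - F j y)) \<in> borel_measurable borel" by measurable
      show "(\<lambda>y. ennreal (L j) * (indicator {t<..} y * ennreal (1 - F j y))) \<in> borel_measurable borel" by measurable
    qed
    show ?thesis using mF by (subst nn_integral_sum) (auto intro!: sum.cong nn_integral_cmult)
  qed
  also have "\<dots> = (\<Sum>j<n. ennreal (L j) * (\<integral>\<^sup>+p. ennreal (quantile (F j) p - t) \<partial>Qm))"
    using F by (intro sum.cong refl) (simp add: slp)
  finally show ?thesis .
qed

lemma mix_sln:
  assumes F: "\<forall>j<n. is_cdf (F j)" and L: "\<forall>j<n. L j \<ge> 0" "(\<Sum>j<n. L j) = 1"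
  shows "(\<integral>\<^sup>+p. ennreal (t - quantile (\<lambda>x. \<Sum>j<n. L j * F j x) p) \<partial>Qm)
       = (\<Sum>j<n. ennreal (L j) * (\<integral>\<^sup>+p. ennreal (t - quantile (F j) p) \<partial>Qm))"
proof -
  have H: "is_cdf (\<lambda>x. \<Sum>j<n. L j * F j x)" by (rule mix_cdf[OF F L])
  have "(\<integral>\<^sup>+p. ennreal (t - quantile (\<lambda>x. \<Sum>j<n. L j * F j x) p) \<partial>Qm)
      = (\<integral>\<^sup>+y. indicator {..<t} y * ennreal (\<Sum>j<n. L j * F j y) \<partial>lborel)"
    by (rule sln[OF H])
  also have "\<dots> = (\<integral>\<^sup>+y. (\<Sum>j<n. ennreal (L j) * (indicator {..<t} y * ennreal (F j y))) \<partial>lborel)"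
  proof (intro nn_integral_cong)
    fix y
    have "ennreal (\<Sum>j<n. L j * F j y) = (\<Sum>j<n. ennreal (L j) * ennreal (F j y))"
      using L F cdf_range by (subst sum_ennreal[symmetric]) (auto simp: ennreal_mult)
    then show "indicator {..<t} y * ennreal (\<Sum>j<n. L j * F j y)
        = (\<Sum>j<n. ennreal (L j) * (indicator {..<t} y * ennreal (F j y)))"
      by (simp add: sum_distrib_left mult.left_commute)
  qed
  also have "\<dots> = (\<Sum>j<n. ennreal (L j) * (\<integral>\<^sup>+y. indicator {..<t} y * ennreal (F j y) \<partial>lborel))"
  proof -
    have mF: "(\<lambda>y. indicator {..<t} y * ennreal (F j y)) \<in> borel_measurable borel"
      "(\<lambda>y. ennreal (L j) * (indicator {..<t} y * ennreal (F j y))) \<in> borel_measurable borel" if "j < n" for j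
    proof -
      have [measurable]: "F j \<in> borel_measurable borel" using F that cdf_meas by auto
      show "(\<lambda>y. indicator {..<t} y * ennreal (F j y)) \<in> borel_measurable borel" by measurable
      show "(\<lambda>y. ennreal (L j) * (indicator {..<t} y * ennreal (F j y))) \<in> borel_measurable borel" by measurable
    qed
    show ?thesis using mF by (subst nn_integral_sum) (auto intro!: sum.cong nn_integral_cmult)
  qed
  also have "\<dots> = (\<Sum>j<n. ennreal (L j) * (\<integral>\<^sup>+p. ennreal (t - quantile (F j) p) \<partial>Qm))"
    using F by (intro sum.cong refl) (simp add: sln)
  finally show ?thesis .
qed

lemma meas_Qm_of_borel: "h \<in> borel_measurable borel \<Longrightarrow> h \<in> borel_measurable Qm"
  unfolding Qm_def by (rule measurable_restrict_space1) simp

definition Pp :: "(real \<Rightarrow> real) \<Rightarrow> real \<Rightarrow> real" where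
  "Pp q t = (\<integral>p. max 0 (q p - t) \<partial>Qm)"
definition Nn :: "(real \<Rightarrow> real) \<Rightarrow> real \<Rightarrow> real" where
  "Nn q t = (\<integral>p. max 0 (t - q p) \<partial>Qm)"
definition Tl :: "(real \<Rightarrow> real) \<Rightarrow> real \<Rightarrow> real" where
  "Tl q s = (\<integral>p. indicator {s<..<1} p * q p \<partial>Qm)"

lemma Pp_nonneg: "0 \<le> Pp q t" unfolding Pp_def by (rule integral_nonneg_AE) auto
lemma Nn_nonneg: "0 \<le> Nn q t" unfolding Nn_def by (rule integral_nonneg_AE) auto

lemma integrable_Qm_const: "integrable Qm (\<lambda>p. c::real)"
proof -
  interpret Q: prob_space Qm by (rule prob_Qm)
  show ?thesis by simp
qed

lemma enn_Pp: assumes q: "integrable Qm q"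
  shows "(\<integral>\<^sup>+p. ennreal (q p - t) \<partial>Qm) = ennreal (Pp q t)"
proof -
  have i: "integrable Qm (\<lambda>p. max 0 (q p - t))"
    using q integrable_Qm_const by (intro integrable_max Bochner_Integration.integrable_diff) auto
  show ?thesis
    unfolding Pp_def using nn_integral_eq_integral[OF i] by (simp add: ennreal_max_0)
qed

lemma enn_Nn: assumes q: "integrable Qm q"
  shows "(\<integral>\<^sup>+p. ennreal (t - q p) \<partial>Qm) = ennreal (Nn q t)"
proof -
  have i: "integrable Qm (\<lambda>p. max 0 (t - q p))"
    using q integrable_Qm_const by (intro integrable_max Bochner_Integration.integrable_diff) auto
  show ?thesis
    unfolding Nn_def using nn_integral_eq_integral[OF i] by (simp add: ennreal_max_0)
qed

lemma mean_PN: fixes q :: "real \<Rightarrow> real" assumes q: "integrable Qm q" shows "(\<integral>p. q p \<partial>Qm) = Pp q 0 - Nn q 0"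
proof -
  have i1: "integrable Qm (\<lambda>p. max 0 (q p - 0))" and i2: "integrable Qm (\<lambda>p. max 0 (0 - q p))"
    using q integrable_Qm_const by (intro integrable_max Bochner_Integration.integrable_diff; auto)+
  have "(\<integral>p. q p \<partial>Qm) = (\<integral>p. max 0 (q p - 0) - max 0 (0 - q p) \<partial>Qm)"
    by (intro Bochner_Integration.integral_cong) auto
  also have "\<dots> = Pp q 0 - Nn q 0" unfolding Pp_def Nn_def by (rule Bochner_Integration.integral_diff[OF i1 i2])
  finally show ?thesis .
qed

lemma integrable_ind: fixes q :: "real \<Rightarrow> real" assumes q: "integrable Qm q"
  shows "integrable Qm (\<lambda>p. indicator {s<..<1} p * q p)"
proof (rule Bochner_Integration.integrable_bound[OF q])
  show "(\<lambda>p. indicator {s<..<1} p * q p) \<in> borel_measurable Qm"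
    using borel_measurable_integrable[OF q] meas_Qm_of_borel[of "indicator {s<..<1}"]
    by (intro borel_measurable_times) auto
qed (auto split: split_indicator)

lemma int_ind_const: fixes c :: real assumes "0 \<le> s" "s < 1"
  shows "(\<integral>p. indicator {s<..<1} p * c \<partial>Qm) = (1 - s) * c"
proof -
  have "measure Qm ({s<..<1} \<inter> space Qm) = measure lborel {s<..<1}"
    using assms by (subst measure_Qm) auto
  then show ?thesis using assms by simp
qed

lemma tail_le:
  assumes q: "integrable Qm q" and s: "0 \<le> s" "s < 1"
  shows "Tl q s \<le> (1 - s) * t + Pp q t"
proof -
  have "Tl q s \<le> (\<integral>p. indicator {s<..<1} p * t + max 0 (q p - t) \<partial>Qm)"
    unfolding Tl_def
  proof (rule integral_mono)
    show "integrable Qm (\<lambda>p. indicator {s<..<1} p * q p)" by (rule integrable_ind[OF q])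
    show "integrable Qm (\<lambda>p. indicator {s<..<1} p * t + max 0 (q p - t))"
      using q integrable_Qm_const integrable_ind[OF integrable_Qm_const]
      by (intro Bochner_Integration.integrable_add integrable_max Bochner_Integration.integrable_diff) auto
  qed (auto split: split_indicator)
  also have "\<dots> = (\<integral>p. indicator {s<..<1} p * t \<partial>Qm) + Pp q t"
    unfolding Pp_def
    using q integrable_Qm_const integrable_ind[OF integrable_Qm_const]
    by (intro Bochner_Integration.integral_add integrable_max Bochner_Integration.integrable_diff) auto
  also have "\<dots> = (1 - s) * t + Pp q t" using int_ind_const[OF s] by simp
  finally show ?thesis .
qed

lemma tail_eq:
  assumes q: "integrable Qm q" and m: "mono_on {0<..<1} q" and s: "0 < s" "s < 1"
  shows "Tl q s = (1 - s) * q s + Pp q (q s)"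
proof -
  have "Tl q s = (\<integral>p. indicator {s<..<1} p * q s + max 0 (q p - q s) \<partial>Qm)"
    unfolding Tl_def
  proof (intro Bochner_Integration.integral_cong refl)
    fix p assume "p \<in> space Qm"
    then have p: "0 < p" "p < 1" by auto
    show "indicator {s<..<1} p * q p = indicator {s<..<1} p * q s + max 0 (q p - q s)"
    proof (cases "s < p")
      case True then have "q s \<le> q p" using m p s by (intro mono_onD[OF m]) auto
      then show ?thesis using True p by (simp add: indicator_def)
    next
      case False then have "q p \<le> q s" using m p s by (intro mono_onD[OF m]) auto
      then show ?thesis using False p by (simp add: indicator_def)
    qed
  qed
  also have "\<dots> = (\<integral>p. indicator {s<..<1} p * q s \<partial>Qm) + Pp q (q s)"
    unfolding Pp_def
    using q integrable_Qm_const integrable_ind[OF integrable_Qm_const]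
    by (intro Bochner_Integration.integral_add integrable_max Bochner_Integration.integrable_diff) auto
  also have "\<dots> = (1 - s) * q s + Pp q (q s)" using int_ind_const s by simp
  finally show ?thesis .
qed

lemma enn_abs: "ennreal \<bar>x\<bar> = ennreal (x - 0) + ennreal (0 - x)"
  by (cases "0 \<le> x") (auto simp: ennreal_neg)

lemma mix_real:
  assumes F: "\<forall>j<n. F j \<in> M1" and L: "\<forall>j<n. L j \<ge> 0" "(\<Sum>j<n. L j) = 1"
  defines "r \<equiv> quantile (\<lambda>x. \<Sum>j<n. L j * F j x)"
  shows "integrable Qm r"
    and "\<And>t. Pp r t = (\<Sum>j<n. L j * Pp (quantile (F j)) t)"
    and "\<And>t. Nn r t = (\<Sum>j<n. L j * Nn (quantile (F j)) t)"
proof -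
  have Fc: "\<forall>j<n. is_cdf (F j)" using F by (auto simp: M1_def)
  have Fi: "integrable Qm (quantile (F j))" if "j < n" for j using F that quantile_integrable by auto
  have H: "is_cdf (\<lambda>x. \<Sum>j<n. L j * F j x)" by (rule mix_cdf[OF Fc L])
  have rm[measurable]: "r \<in> borel_measurable Qm" unfolding r_def by (rule quantile_meas[OF H])
  have P: "(\<integral>\<^sup>+p. ennreal (r p - t) \<partial>Qm) = ennreal (\<Sum>j<n. L j * Pp (quantile (F j)) t)" for t
    unfolding r_def mix_slp[OF Fc L]
    using L Fi Pp_nonneg by (subst sum_ennreal[symmetric]) (auto simp: enn_Pp ennreal_mult intro!: sum.cong)
  have N: "(\<integral>\<^sup>+p. ennreal (t - r p) \<partial>Qm) = ennreal (\<Sum>j<n. L j * Nn (quantile (F j)) t)" for t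
    unfolding r_def mix_sln[OF Fc L]
    using L Fi Nn_nonneg by (subst sum_ennreal[symmetric]) (auto simp: enn_Nn ennreal_mult intro!: sum.cong)
  show ri: "integrable Qm r"
  proof (rule integrableI_bounded)
    have "(\<integral>\<^sup>+p. ennreal (norm (r p)) \<partial>Qm) = (\<integral>\<^sup>+p. ennreal (r p - 0) + ennreal (0 - r p) \<partial>Qm)"
      by (simp add: enn_abs)
    also have "\<dots> = (\<integral>\<^sup>+p. ennreal (r p - 0) \<partial>Qm) + (\<integral>\<^sup>+p. ennreal (0 - r p) \<partial>Qm)"
      by (rule nn_integral_add) auto
    also have "\<dots> < \<infinity>" unfolding P N by simp
    finally show "(\<integral>\<^sup>+p. ennreal (norm (r p)) \<partial>Qm) < \<infinity>" .
  qed simp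
  fix t
  have "ennreal (Pp r t) = ennreal (\<Sum>j<n. L j * Pp (quantile (F j)) t)"
    using P[of t] enn_Pp[OF ri] by simp
  then show "Pp r t = (\<Sum>j<n. L j * Pp (quantile (F j)) t)"
    using L Pp_nonneg by (subst (asm) ennreal_inj) (auto intro!: sum_nonneg)
  have "ennreal (Nn r t) = ennreal (\<Sum>j<n. L j * Nn (quantile (F j)) t)"
    using N[of t] enn_Nn[OF ri] by simp
  then show "Nn r t = (\<Sum>j<n. L j * Nn (quantile (F j)) t)"
    using L Nn_nonneg by (subst (asm) ennreal_inj) (auto intro!: sum_nonneg)
qed

lemma Tl_sum:
  assumes "\<And>i. i \<in> I \<Longrightarrow> integrable Qm (h i)"
  shows "Tl (\<lambda>p. \<Sum>i\<in>I. h i p) s = (\<Sum>i\<in>I. Tl (h i) s)"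
proof -
  have "Tl (\<lambda>p. \<Sum>i\<in>I. h i p) s = (\<integral>p. (\<Sum>i\<in>I. indicator {s<..<1} p * h i p) \<partial>Qm)"
    unfolding Tl_def by (simp add: sum_distrib_left)
  also have "\<dots> = (\<Sum>i\<in>I. Tl (h i) s)"
    unfolding Tl_def by (rule Bochner_Integration.integral_sum) (rule integrable_ind[OF assms])
  finally show ?thesis .
qed

lemma majorization:
  assumes F: "\<forall>j<n. F j \<in> M1" and L: "doubly_stochastic n L"
  defines "f \<equiv> \<lambda>p. \<Sum>j<n. quantile (F j) p" and "g \<equiv> \<lambda>p. \<Sum>i<n. quantile (mat_mix n L F i) p"
  shows "integrable Qm f" "integrable Qm g" "(\<integral>p. f p \<partial>Qm) = (\<integral>p. g p \<partial>Qm)"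
    "\<And>s. 0 < s \<Longrightarrow> s < 1 \<Longrightarrow> Tl f s \<le> Tl g s"
proof -
  have Lnn: "\<And>i j. i < n \<Longrightarrow> j < n \<Longrightarrow> 0 \<le> L i j" and Lr: "\<And>i. i < n \<Longrightarrow> (\<Sum>j<n. L i j) = 1"
    and Lc: "\<And>j. j < n \<Longrightarrow> (\<Sum>i<n. L i j) = 1"
    using L by (auto simp: doubly_stochastic_def)
  have mm: "mat_mix n L F i = (\<lambda>x. \<Sum>j<n. L i j * F j x)" for i by (simp add: mat_mix_def)
  have qi: "integrable Qm (quantile (F j))" if "j < n" for j using F that quantile_integrable by auto
  have Fc: "\<forall>j<n. is_cdf (F j)" using F by (auto simp: M1_def)
  have ri: "integrable Qm (quantile (mat_mix n L F i))"
    and rP: "\<And>t. Pp (quantile (mat_mix n L F i)) t = (\<Sum>j<n. L i j * Pp (quantile (F j)) t)"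
    and rN: "\<And>t. Nn (quantile (mat_mix n L F i)) t = (\<Sum>j<n. L i j * Nn (quantile (F j)) t)"
    if "i < n" for i
    using mix_real[OF F, of "L i"] Lnn[OF that] Lr[OF that] unfolding mm by auto
  have rc: "is_cdf (mat_mix n L F i)" if "i < n" for i
    unfolding mm using mix_cdf[OF Fc, of "L i"] Lnn[OF that] Lr[OF that] by auto
  show fi: "integrable Qm f" unfolding f_def using qi by (intro Bochner_Integration.integrable_sum) auto
  show gi: "integrable Qm g" unfolding g_def using ri by (intro Bochner_Integration.integrable_sum) auto
  have "(\<integral>p. g p \<partial>Qm) = (\<Sum>i<n. (\<integral>p. quantile (mat_mix n L F i) p \<partial>Qm))"
    unfolding g_def using ri by (intro Bochner_Integration.integral_sum) auto
  also have "\<dots> = (\<Sum>i<n. \<Sum>j<n. L i j * (\<integral>p. quantile (F j) p \<partial>Qm))"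
  proof (intro sum.cong refl)
    fix i assume "i \<in> {..<n}" then have i: "i < n" by simp
    have "(\<integral>p. quantile (mat_mix n L F i) p \<partial>Qm) = Pp (quantile (mat_mix n L F i)) 0 - Nn (quantile (mat_mix n L F i)) 0"
      by (rule mean_PN[OF ri[OF i]])
    also have "\<dots> = (\<Sum>j<n. L i j * (Pp (quantile (F j)) 0 - Nn (quantile (F j)) 0))"
      unfolding rP[OF i] rN[OF i] by (simp add: sum_subtractf right_diff_distrib)
    also have "\<dots> = (\<Sum>j<n. L i j * (\<integral>p. quantile (F j) p \<partial>Qm))"
      using qi mean_PN by (intro sum.cong refl) auto
    finally show "(\<integral>p. quantile (mat_mix n L F i) p \<partial>Qm) = (\<Sum>j<n. L i j * (\<integral>p. quantile (F j) p \<partial>Qm))" .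
  qed
  also have "\<dots> = (\<Sum>j<n. (\<Sum>i<n. L i j) * (\<integral>p. quantile (F j) p \<partial>Qm))"
    by (subst sum.swap) (simp add: sum_distrib_right)
  also have "\<dots> = (\<Sum>j<n. (\<integral>p. quantile (F j) p \<partial>Qm))"
    using Lc by simp
  also have "\<dots> = (\<integral>p. f p \<partial>Qm)"
    unfolding f_def using qi by (intro Bochner_Integration.integral_sum[symmetric]) auto
  finally show "(\<integral>p. f p \<partial>Qm) = (\<integral>p. g p \<partial>Qm)" ..
  fix s :: real assume s: "0 < s" "s < 1"
  have "Tl f s = (\<Sum>j<n. Tl (quantile (F j)) s)"
    unfolding f_def using qi by (intro Tl_sum) auto
  also have "\<dots> = (\<Sum>j<n. (\<Sum>i<n. L i j) * Tl (quantile (F j)) s)"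
    using Lc by simp
  also have "\<dots> = (\<Sum>i<n. \<Sum>j<n. L i j * Tl (quantile (F j)) s)"
    by (subst sum.swap) (simp add: sum_distrib_right)
  also have "\<dots> \<le> (\<Sum>i<n. Tl (quantile (mat_mix n L F i)) s)"
  proof (rule sum_mono)
    fix i assume "i \<in> {..<n}" then have i: "i < n" by simp
    define t where "t = quantile (mat_mix n L F i) s"
    have "(\<Sum>j<n. L i j * Tl (quantile (F j)) s) \<le> (\<Sum>j<n. L i j * ((1 - s) * t + Pp (quantile (F j)) t))"
      using s qi Lnn[OF i] by (intro sum_mono mult_left_mono tail_le) auto
    also have "\<dots> = (1 - s) * t + (\<Sum>j<n. L i j * Pp (quantile (F j)) t)"
      using Lr[OF i] by (simp add: distrib_left sum.distrib sum_distrib_right[symmetric] mult.commute)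
    also have "\<dots> = Tl (quantile (mat_mix n L F i)) s"
      unfolding t_def rP[OF i, symmetric]
      by (rule tail_eq[symmetric, OF ri[OF i] quantile_mono_on[OF rc[OF i]] s])
    finally show "(\<Sum>j<n. L i j * Tl (quantile (F j)) s) \<le> Tl (quantile (mat_mix n L F i)) s" .
  qed
  also have "\<dots> = Tl g s"
    unfolding g_def using ri by (intro Tl_sum[symmetric]) auto
  finally show "Tl f s \<le> Tl g s" .
qed

lemma upper_set_int:
  fixes d :: "real \<Rightarrow> real"
  assumes d: "integrable Qm d" and d0: "(\<integral>p. d p \<partial>Qm) = 0" and tl: "\<And>s. 0 < s \<Longrightarrow> s < 1 \<Longrightarrow> 0 \<le> Tl d s"
    and U: "U \<in> sets Qm" and up: "\<And>p p'. p \<in> U \<Longrightarrow> p \<le> p' \<Longrightarrow> p' < 1 \<Longrightarrow> p' \<in> U"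
  shows "0 \<le> (\<integral>p. indicator U p * d p \<partial>Qm)"
proof (cases "U = {}")
  case True then show ?thesis by simp
next
  case False
  have Usub: "U \<subseteq> {0<..<1}" using sets.sets_into_space[OF U] by simp
  have bdd: "bdd_below U" using Usub by (auto intro!: bdd_belowI[of _ 0])
  define s where "s = Inf U"
  obtain u where u: "u \<in> U" using False by blast
  have s0: "0 \<le> s" unfolding s_def using Usub False by (intro cInf_greatest) auto
  have s1: "s < 1" unfolding s_def using cInf_lower[OF u bdd] u Usub by auto
  have above: "p \<in> U" if sp: "s < p" "p < 1" for p
  proof -
    obtain v where "v \<in> U" "v < p" using cInf_lessD[OF False, of p] sp unfolding s_def by blast
    then show ?thesis using up[of v p] sp by auto
  qed
  have below: "s \<le> p" if "p \<in> U" for p unfolding s_def by (rule cInf_lower[OF that bdd])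
  show ?thesis
  proof (cases "s = 0")
    case True
    have "(\<integral>p. indicator U p * d p \<partial>Qm) = (\<integral>p. d p \<partial>Qm)"
      by (intro Bochner_Integration.integral_cong refl) (use above True in \<open>auto simp: indicator_def\<close>)
    then show ?thesis using d0 by simp
  next
    case False
    then have s: "0 < s" "s < 1" using s0 s1 by auto
    have ae: "AE p in Qm. p \<noteq> s"
      unfolding Qm_def by (subst AE_restrict_space_iff) (auto intro: AE_mp[OF AE_lborel_singleton[of s]])
    have "(\<integral>p. indicator U p * d p \<partial>Qm) = (\<integral>p. indicator {s<..<1} p * d p \<partial>Qm)"
    proof (rule integral_cong_AE)
      show "(\<lambda>p. indicator U p * d p) \<in> borel_measurable Qm"
        using U borel_measurable_integrable[OF d] by measurable
      show "(\<lambda>p. indicator {s<..<1} p * d p) \<in> borel_measurable Qm"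
        using borel_measurable_integrable[OF integrable_ind[OF d, of s]] .
      show "AE p in Qm. indicator U p * d p = indicator {s<..<1} p * d p"
        using ae
      proof (rule AE_mp, intro AE_I2 impI)
        fix p assume p: "p \<in> space Qm" "p \<noteq> s"
        have "p \<in> U \<longleftrightarrow> p \<in> {s<..<1}" using above below p Usub by force
        then show "indicator U p * d p = indicator {s<..<1} p * d p" by (simp add: indicator_def)
      qed
    qed
    also have "\<dots> = Tl d s" by (simp add: Tl_def)
    finally show ?thesis using tl[OF s] by simp
  qed
qed

lemma monotone_weight:
  fixes H d :: "real \<Rightarrow> real"
  assumes d: "integrable Qm d" and d0: "(\<integral>p. d p \<partial>Qm) = 0" and tl: "\<And>s. 0 < s \<Longrightarrow> s < 1 \<Longrightarrow> 0 \<le> Tl d s"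
    and Hm: "mono_on {0<..<1} H" and Hb: "\<And>p. 0 < p \<Longrightarrow> p < 1 \<Longrightarrow> \<bar>H p\<bar> \<le> B"
  shows "0 \<le> (\<integral>p. H p * d p \<partial>Qm)"
proof -
  interpret Q: prob_space Qm by (rule prob_Qm)
  interpret P: pair_sigma_finite Qm lborel ..
  note Hmeas[measurable] = mono_on_meas_Qm[OF Hm]
  note dmeas[measurable] = borel_measurable_integrable[OF d]
  have B0: "0 \<le> B" using Hb[of "1/2"] by simp
  define W where "W p = H p + B" for p
  have W0: "0 \<le> W p" "W p \<le> 2 * B" if "p \<in> space Qm" for p using Hb[of p] that by (auto simp: W_def)
  have Wm[measurable]: "W \<in> borel_measurable Qm" unfolding W_def by measurable
  have intW: "integrable Qm (\<lambda>p. W p * e p)" if e: "e \<in> borel_measurable Qm" "\<And>p. \<bar>e p\<bar> \<le> \<bar>d p\<bar>" for e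
  proof (rule Bochner_Integration.integrable_bound)
    show "integrable Qm (\<lambda>p. 2 * B * \<bar>d p\<bar>)" using d by auto
    show "(\<lambda>p. W p * e p) \<in> borel_measurable Qm" using e(1) by measurable
    show "AE p in Qm. norm (W p * e p) \<le> norm (2 * B * \<bar>d p\<bar>)"
    proof (rule AE_I2)
      fix p assume p: "p \<in> space Qm"
      have "\<bar>W p\<bar> * \<bar>e p\<bar> \<le> (2 * B) * \<bar>d p\<bar>"
        using W0[OF p] e(2)[of p] B0 by (intro mult_mono) auto
      then show "norm (W p * e p) \<le> norm (2 * B * \<bar>d p\<bar>)" using B0 by (simp add: abs_mult)
    qed
  qed
  define dp where "dp p = max 0 (d p)" for p
  define dn where "dn p = max 0 (- d p)" for p
  have dpm[measurable]: "dp \<in> borel_measurable Qm" unfolding dp_def by measurable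
  have dnm[measurable]: "dn \<in> borel_measurable Qm" unfolding dn_def by measurable
  have dpi: "integrable Qm dp" unfolding dp_def using d by auto
  have dni: "integrable Qm dn" unfolding dn_def using d by auto
  have key: "(\<integral>\<^sup>+p. ennreal (W p * e p) \<partial>Qm)
      = (\<integral>\<^sup>+y. indicator {0..} y * (\<integral>\<^sup>+p. indicator {p\<in>space Qm. y < W p} p * ennreal (e p) \<partial>Qm) \<partial>lborel)"
    if e[measurable]: "e \<in> borel_measurable Qm" and e0: "\<And>p. 0 \<le> e p" for e
  proof -
    have "(\<integral>\<^sup>+p. ennreal (W p * e p) \<partial>Qm) = (\<integral>\<^sup>+p. \<integral>\<^sup>+y. indicator {0..<W p} y * ennreal (e p) \<partial>lborel \<partial>Qm)"
    proof (intro nn_integral_cong)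
      fix p assume p: "p \<in> space Qm"
      have "ennreal (W p * e p) = ennreal (W p) * ennreal (e p)" using W0[OF p] e0 by (simp add: ennreal_mult)
      also have "ennreal (W p) = (\<integral>\<^sup>+y. indicator {0..<W p} y \<partial>lborel)" using W0[OF p] by simp
      finally show "ennreal (W p * e p) = (\<integral>\<^sup>+y. indicator {0..<W p} y * ennreal (e p) \<partial>lborel)"
        by (simp add: nn_integral_multc)
    qed
    also have "\<dots> = (\<integral>\<^sup>+y. \<integral>\<^sup>+p. indicator {0..<W p} y * ennreal (e p) \<partial>Qm \<partial>lborel)"
    proof (rule P.Fubini'[symmetric])
      have "(\<lambda>(p, y). indicator {0..<W p} y * ennreal (e p))
          = (\<lambda>x. if 0 \<le> snd x \<and> snd x < W (fst x) then ennreal (e (fst x)) else 0)"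
        by (auto simp: fun_eq_iff split: split_indicator)
      moreover have "(\<lambda>x. if 0 \<le> snd x \<and> snd x < W (fst x) then ennreal (e (fst x)) else 0) \<in> borel_measurable (Qm \<Otimes>\<^sub>M lborel)"
        by measurable
      ultimately show "(\<lambda>(p, y). indicator {0..<W p} y * ennreal (e p)) \<in> borel_measurable (Qm \<Otimes>\<^sub>M lborel)"
        by simp
    qed
    also have "\<dots> = (\<integral>\<^sup>+y. indicator {0..} y * (\<integral>\<^sup>+p. indicator {p\<in>space Qm. y < W p} p * ennreal (e p) \<partial>Qm) \<partial>lborel)"
    proof (intro nn_integral_cong)
      fix y :: real
      have "(\<integral>\<^sup>+p. indicator {0..<W p} y * ennreal (e p) \<partial>Qm)
          = (\<integral>\<^sup>+p. indicator {0..} y * (indicator {p\<in>space Qm. y < W p} p * ennreal (e p)) \<partial>Qm)"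
        by (intro nn_integral_cong) (auto split: split_indicator)
      also have "\<dots> = indicator {0..} y * (\<integral>\<^sup>+p. indicator {p\<in>space Qm. y < W p} p * ennreal (e p) \<partial>Qm)"
      proof -
        have ms: "{p\<in>space Qm. y < W p} \<in> sets Qm" by measurable
        show ?thesis by (rule nn_integral_cmult) (use ms in measurable)
      qed
      finally show "(\<integral>\<^sup>+p. indicator {0..<W p} y * ennreal (e p) \<partial>Qm)
          = indicator {0..} y * (\<integral>\<^sup>+p. indicator {p\<in>space Qm. y < W p} p * ennreal (e p) \<partial>Qm)" .
    qed
    finally show ?thesis .
  qed
  have cmp: "(\<integral>\<^sup>+p. indicator {p\<in>space Qm. y < W p} p * ennreal (dn p) \<partial>Qm)
      \<le> (\<integral>\<^sup>+p. indicator {p\<in>space Qm. y < W p} p * ennreal (dp p) \<partial>Qm)" for y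
  proof -
    define U where "U = {p\<in>space Qm. y < W p}"
    have U: "U \<in> sets Qm" unfolding U_def by measurable
    have up: "p' \<in> U" if "p \<in> U" "p \<le> p'" "p' < 1" for p p'
    proof -
      have "H p \<le> H p'" using that by (intro mono_onD[OF Hm]) (auto simp: U_def)
      then show ?thesis using that by (auto simp: U_def W_def)
    qed
    have iU: "integrable Qm (\<lambda>p. indicator U p * e p)" if "integrable Qm e" for e :: "real \<Rightarrow> real"
      using integrable_real_mult_indicator[OF U that] by (simp add: mult.commute)
    have eq: "(\<integral>\<^sup>+p. indicator U p * ennreal (e p) \<partial>Qm) = ennreal (\<integral>p. indicator U p * e p \<partial>Qm)"
      if "integrable Qm e" "\<And>p. 0 \<le> e p" for e
    proof -
      have "(\<integral>\<^sup>+p. indicator U p * ennreal (e p) \<partial>Qm) = (\<integral>\<^sup>+p. ennreal (indicator U p * e p) \<partial>Qm)"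
        by (intro nn_integral_cong) (auto split: split_indicator)
      also have "\<dots> = ennreal (\<integral>p. indicator U p * e p \<partial>Qm)"
        using that by (intro nn_integral_eq_integral iU) auto
      finally show ?thesis .
    qed
    have "0 \<le> (\<integral>p. indicator U p * d p \<partial>Qm)" by (rule upper_set_int[OF d d0 tl U up])
    also have "(\<integral>p. indicator U p * d p \<partial>Qm) = (\<integral>p. indicator U p * dp p - indicator U p * dn p \<partial>Qm)"
      by (intro Bochner_Integration.integral_cong refl) (auto simp: dp_def dn_def indicator_def)
    also have "\<dots> = (\<integral>p. indicator U p * dp p \<partial>Qm) - (\<integral>p. indicator U p * dn p \<partial>Qm)"
      by (intro Bochner_Integration.integral_diff iU dpi dni)
    finally have "(\<integral>p. indicator U p * dn p \<partial>Qm) \<le> (\<integral>p. indicator U p * dp p \<partial>Qm)" by simp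
    then show ?thesis unfolding U_def[symmetric]
      using eq[OF dpi] eq[OF dni] by (simp add: dp_def dn_def ennreal_leI)
  qed
  have bn: "\<And>p. \<bar>dn p\<bar> \<le> \<bar>d p\<bar>" "\<And>p. 0 \<le> dn p" by (auto simp: dn_def)
  have bp: "\<And>p. \<bar>dp p\<bar> \<le> \<bar>d p\<bar>" "\<And>p. 0 \<le> dp p" by (auto simp: dp_def)
  have le_nn: "(\<integral>\<^sup>+p. ennreal (W p * dn p) \<partial>Qm) \<le> (\<integral>\<^sup>+p. ennreal (W p * dp p) \<partial>Qm)"
    unfolding key[OF dnm bn(2)] key[OF dpm bp(2)]
    by (intro nn_integral_mono mult_left_mono cmp) simp
  have toR: "(\<integral>\<^sup>+p. ennreal (W p * e p) \<partial>Qm) = ennreal (\<integral>p. W p * e p \<partial>Qm)"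
    if "e \<in> borel_measurable Qm" "\<And>p. \<bar>e p\<bar> \<le> \<bar>d p\<bar>" "\<And>p. 0 \<le> e p" for e
    using that W0 by (intro nn_integral_eq_integral intW) auto
  have "ennreal (\<integral>p. W p * dn p \<partial>Qm) \<le> ennreal (\<integral>p. W p * dp p \<partial>Qm)"
    using le_nn by (simp only: toR[OF dnm bn] toR[OF dpm bp])
  moreover have "0 \<le> (\<integral>p. W p * dn p \<partial>Qm)"
    using W0 by (intro integral_nonneg_AE AE_I2) (auto simp: dn_def)
  moreover have "0 \<le> (\<integral>p. W p * dp p \<partial>Qm)"
    using W0 by (intro integral_nonneg_AE AE_I2) (auto simp: dp_def)
  ultimately have le: "(\<integral>p. W p * dn p \<partial>Qm) \<le> (\<integral>p. W p * dp p \<partial>Qm)"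
    by (simp add: ennreal_le_iff2) linarith
  have iWd: "integrable Qm (\<lambda>p. W p * d p)" by (rule intW) auto
  have "(\<integral>p. H p * d p \<partial>Qm) = (\<integral>p. W p * d p - B * d p \<partial>Qm)"
    by (intro Bochner_Integration.integral_cong refl) (simp add: W_def algebra_simps)
  also have "\<dots> = (\<integral>p. W p * d p \<partial>Qm) - B * (\<integral>p. d p \<partial>Qm)"
    using iWd d by simp
  also have "\<dots> = (\<integral>p. W p * d p \<partial>Qm)" using d0 by simp
  also have "\<dots> = (\<integral>p. W p * dp p - W p * dn p \<partial>Qm)"
    by (intro Bochner_Integration.integral_cong refl) (auto simp: dp_def dn_def algebra_simps max_def)
  also have "\<dots> = (\<integral>p. W p * dp p \<partial>Qm) - (\<integral>p. W p * dn p \<partial>Qm)"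
    by (intro Bochner_Integration.integral_diff intW) (auto simp: dp_def dn_def)
  finally show ?thesis using le by simp
qed

definition slope :: "(real \<Rightarrow> real) \<Rightarrow> real \<Rightarrow> real \<Rightarrow> real" where
  "slope \<phi> a b = (\<phi> b - \<phi> a) / (b - a)"
definition sg :: "(real \<Rightarrow> real) \<Rightarrow> real \<Rightarrow> real" where
  "sg \<phi> x = Inf ((\<lambda>y. slope \<phi> x y) ` {x<..})"

lemma swap_quot: "(p - q) / (r - s) = (q - p) / (s - (r::real))"
  by (metis minus_diff_eq minus_divide_divide)

lemma three_slope:
  assumes c: "convex_on UNIV \<phi>" and "a < b" "b < c"
  shows "slope \<phi> a b \<le> slope \<phi> a c" "slope \<phi> a c \<le> slope \<phi> b c"
  using convex_on_slope_le[OF c, of a c b] assms by (auto simp: slope_def swap_quot)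

context
  fixes \<phi> :: "real \<Rightarrow> real"
  assumes cvx: "convex_on UNIV \<phi>"
begin

lemma sg_bdd: "bdd_below ((\<lambda>y. slope \<phi> x y) ` {x<..})"
proof (rule bdd_belowI[of _ "slope \<phi> (x - 1) x"])
  fix z assume "z \<in> (\<lambda>y. slope \<phi> x y) ` {x<..}"
  then obtain y where y: "x < y" "z = slope \<phi> x y" by auto
  show "slope \<phi> (x - 1) x \<le> z"
    using three_slope[OF cvx, of "x - 1" x y] y by auto
qed

lemma sg_le: "x < y \<Longrightarrow> sg \<phi> x \<le> slope \<phi> x y"
  unfolding sg_def by (rule cInf_lower[OF _ sg_bdd]) auto

lemma sg_ge: assumes "y < x" shows "slope \<phi> y x \<le> sg \<phi> x"
  unfolding sg_def
proof (rule cInf_greatest)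
  show "(\<lambda>y. slope \<phi> x y) ` {x<..} \<noteq> {}" by auto
  fix z assume "z \<in> (\<lambda>y. slope \<phi> x y) ` {x<..}"
  then obtain w where w: "x < w" "z = slope \<phi> x w" by auto
  show "slope \<phi> y x \<le> z" using three_slope[OF cvx, of y x w] w assms by auto
qed

lemma tangent: "\<phi> x + sg \<phi> x * (z - x) \<le> \<phi> z"
proof (cases z x rule: linorder_cases)
  case less
  have "(\<phi> x - \<phi> z) / (x - z) \<le> sg \<phi> x" using sg_ge[OF less] by (simp add: slope_def)
  then have "\<phi> x - \<phi> z \<le> sg \<phi> x * (x - z)" using less by (simp add: pos_divide_le_eq)
  then show ?thesis by (simp add: algebra_simps)
next
  case greater
  have "sg \<phi> x \<le> (\<phi> z - \<phi> x) / (z - x)" using sg_le[OF greater] by (simp add: slope_def)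
  then have "sg \<phi> x * (z - x) \<le> \<phi> z - \<phi> x" using greater by (simp add: pos_le_divide_eq)
  then show ?thesis by simp
qed simp

lemma sg_mono: "x \<le> x' \<Longrightarrow> sg \<phi> x \<le> sg \<phi> x'"
proof (cases "x = x'")
  case False
  assume "x \<le> x'" then have "x < x'" using False by simp
  then show ?thesis using sg_le[of x x'] sg_ge[of x x'] by simp
qed simp

lemma sg_meas[measurable]: "sg \<phi> \<in> borel_measurable borel"
  by (rule borel_measurable_mono) (auto intro: monoI sg_mono)

lemma phi_meas[measurable]: "\<phi> \<in> borel_measurable borel"
  by (rule borel_measurable_continuous_onI) (rule convex_on_continuous[OF open_UNIV cvx])

definition clampM :: "real \<Rightarrow> real \<Rightarrow> real" where "clampM M y = max (- M) (min M y)"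
definition phiM :: "real \<Rightarrow> real \<Rightarrow> real" where
  "phiM M y = \<phi> (clampM M y) + sg \<phi> (clampM M y) * (y - clampM M y)"

lemma phiM_meas[measurable]: "phiM M \<in> borel_measurable borel"
  unfolding phiM_def clampM_def by measurable

lemma phiM_tangent:
  assumes "0 \<le> M" "- M \<le> x" "x \<le> M"
  shows "\<phi> x + sg \<phi> x * (z - x) \<le> phiM M z"
proof -
  consider "z < - M" | "- M \<le> z" "z \<le> M" | "M < z" by linarith
  then show ?thesis
  proof cases
    case 1
    then have cz: "clampM M z = - M" using assms by (simp add: clampM_def)
    have "sg \<phi> (- M) \<le> sg \<phi> x" using assms by (intro sg_mono) simp
    then have "sg \<phi> x * (z + M) \<le> sg \<phi> (- M) * (z + M)" using 1 by (intro mult_right_mono_neg) auto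
    moreover have "\<phi> x + sg \<phi> x * (- M - x) \<le> \<phi> (- M)" by (rule tangent)
    ultimately show ?thesis unfolding phiM_def cz by (simp add: algebra_simps)
  next
    case 2
    then have cz: "clampM M z = z" by (simp add: clampM_def)
    show ?thesis unfolding phiM_def cz using tangent[of x z] by simp
  next
    case 3
    then have cz: "clampM M z = M" using assms by (simp add: clampM_def)
    have "sg \<phi> x \<le> sg \<phi> M" using assms by (intro sg_mono) simp
    then have "sg \<phi> x * (z - M) \<le> sg \<phi> M * (z - M)" using 3 by (intro mult_right_mono) auto
    moreover have "\<phi> x + sg \<phi> x * (M - x) \<le> \<phi> M" by (rule tangent)
    ultimately show ?thesis unfolding phiM_def cz by (simp add: algebra_simps)
  qed
qed

lemma clamp_range: "0 \<le> M \<Longrightarrow> - M \<le> clampM M y \<and> clampM M y \<le> M"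
  by (simp add: clampM_def)

lemma phiM_sub:
  assumes "0 \<le> M" shows "phiM M y + sg \<phi> (clampM M y) * (z - y) \<le> phiM M z"
  using phiM_tangent[OF assms, of "clampM M y" z] clamp_range[OF assms, of y]
  by (simp add: phiM_def algebra_simps)

lemma phiM_le: "phiM M y \<le> \<phi> y"
  unfolding phiM_def by (rule tangent)

lemma phiM_eq: "\<bar>y\<bar> \<le> M \<Longrightarrow> phiM M y = \<phi> y"
  by (simp add: phiM_def clampM_def)

lemma phiM_mono: assumes "0 \<le> M" "M \<le> M'" shows "phiM M y \<le> phiM M' y"
  using phiM_tangent[of M' "clampM M y" y] clamp_range[OF assms(1), of y] assms
  by (simp add: phiM_def)

lemma phiM_lower: "0 \<le> M \<Longrightarrow> \<phi> 0 + sg \<phi> 0 * y \<le> phiM M y"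
  using phiM_tangent[of M 0 y] by simp

lemma phiM_bound:
  assumes M: "0 \<le> M"
  shows "\<exists>K1 K2. \<forall>y. \<bar>phiM M y\<bar> \<le> K1 + K2 * \<bar>y\<bar>"
proof -
  define S where "S = \<bar>sg \<phi> (- M)\<bar> + \<bar>sg \<phi> M\<bar>"
  define K1 where "K1 = \<bar>\<phi> (- M)\<bar> + \<bar>\<phi> M\<bar> + \<bar>\<phi> 0\<bar> + S * M"
  define K2 where "K2 = S + \<bar>sg \<phi> 0\<bar>"
  have "\<bar>phiM M y\<bar> \<le> K1 + K2 * \<bar>y\<bar>" for y
  proof -
    let ?c = "clampM M y"
    have cr: "- M \<le> ?c" "?c \<le> M" using clamp_range[OF M] by auto
    have cv: "convex_on {- M..M} \<phi>" by (rule convex_on_subset[OF cvx]) auto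
    have up1: "\<phi> ?c \<le> max (\<phi> (- M)) (\<phi> M)" by (rule convex_on_le_max[OF cv]) (use cr in auto)
    have "sg \<phi> (- M) \<le> sg \<phi> ?c" "sg \<phi> ?c \<le> sg \<phi> M" using cr by (auto intro: sg_mono)
    then have sgb: "\<bar>sg \<phi> ?c\<bar> \<le> S" by (auto simp: S_def)
    have db: "\<bar>y - ?c\<bar> \<le> \<bar>y\<bar> + M" using cr by auto
    have "\<bar>sg \<phi> ?c * (y - ?c)\<bar> \<le> S * (\<bar>y\<bar> + M)"
      unfolding abs_mult by (rule mult_mono[OF sgb db]) (auto simp: S_def)
    then have up: "phiM M y \<le> max (\<phi> (- M)) (\<phi> M) + S * (\<bar>y\<bar> + M)"
      using up1 unfolding phiM_def by linarith
    have m1: "max (\<phi> (- M)) (\<phi> M) \<le> \<bar>\<phi> (- M)\<bar> + \<bar>\<phi> M\<bar>" by auto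
    have up': "phiM M y \<le> \<bar>\<phi> (- M)\<bar> + \<bar>\<phi> M\<bar> + S * \<bar>y\<bar> + S * M"
      using up m1 by (simp add: distrib_left)
    have lo: "\<phi> 0 + sg \<phi> 0 * y \<le> phiM M y" by (rule phiM_lower[OF M])
    have "\<bar>sg \<phi> 0 * y\<bar> = \<bar>sg \<phi> 0\<bar> * \<bar>y\<bar>" by (simp add: abs_mult)
    then have lo2: "- \<bar>\<phi> 0\<bar> - \<bar>sg \<phi> 0\<bar> * \<bar>y\<bar> \<le> \<phi> 0 + sg \<phi> 0 * y"
      using abs_ge_minus_self[of "sg \<phi> 0 * y"] abs_ge_minus_self[of "\<phi> 0"] by linarith
    have "0 \<le> S * M" "0 \<le> \<bar>sg \<phi> 0\<bar> * \<bar>y\<bar>" "0 \<le> S * \<bar>y\<bar>" using M by (auto simp: S_def)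
    then show ?thesis using up' lo lo2 unfolding K1_def K2_def distrib_right abs_le_iff by linarith
  qed
  then show ?thesis by blast
qed

end

lemma integrable_phiM:
  assumes cvx: "convex_on UNIV \<phi>" and M: "0 \<le> M" and hi: "integrable Qm h"
  shows "integrable Qm (\<lambda>p. phiM \<phi> M (h p))"
proof -
  interpret Q: prob_space Qm by (rule prob_Qm)
  obtain K1 K2 where K: "\<And>y. \<bar>phiM \<phi> M y\<bar> \<le> K1 + K2 * \<bar>y\<bar>" using phiM_bound[OF cvx M] by blast
  note hm[measurable] = borel_measurable_integrable[OF hi]
  note pm[measurable] = phiM_meas[OF cvx]
  show ?thesis
  proof (rule Bochner_Integration.integrable_bound)
    show "integrable Qm (\<lambda>p. K1 + K2 * \<bar>h p\<bar>)" using hi by auto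
    show "(\<lambda>p. phiM \<phi> M (h p)) \<in> borel_measurable Qm" by measurable
    show "AE p in Qm. norm (phiM \<phi> M (h p)) \<le> norm (K1 + K2 * \<bar>h p\<bar>)"
    proof (rule AE_I2)
      fix p
      have "\<bar>phiM \<phi> M (h p)\<bar> \<le> K1 + K2 * \<bar>h p\<bar>" by (rule K)
      also have "\<dots> \<le> \<bar>K1 + K2 * \<bar>h p\<bar>\<bar>" by (rule abs_ge_self)
      finally show "norm (phiM \<phi> M (h p)) \<le> norm (K1 + K2 * \<bar>h p\<bar>)" by simp
    qed
  qed
qed

lemma phiM_ineq:
  assumes cvx: "convex_on UNIV \<phi>" and M: "0 \<le> M" and fi: "integrable Qm f" and gi: "integrable Qm g"
    and fm: "mono_on {0<..<1} f" and mean: "(\<integral>p. f p \<partial>Qm) = (\<integral>p. g p \<partial>Qm)"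
    and tl: "\<And>s. 0 < s \<Longrightarrow> s < 1 \<Longrightarrow> Tl f s \<le> Tl g s"
  shows "(\<integral>p. phiM \<phi> M (f p) \<partial>Qm) \<le> (\<integral>p. phiM \<phi> M (g p) \<partial>Qm)"
proof -
  note fmeas[measurable] = borel_measurable_integrable[OF fi]
  note gmeas[measurable] = borel_measurable_integrable[OF gi]
  note sgm[measurable] = sg_meas[OF cvx]
  define d where "d p = g p - f p" for p
  have di: "integrable Qm d" unfolding d_def using fi gi by auto
  have d0: "(\<integral>p. d p \<partial>Qm) = 0" unfolding d_def using fi gi mean by simp
  have dtl: "0 \<le> Tl d s" if "0 < s" "s < 1" for s
  proof -
    have "Tl d s = (\<integral>p. indicator {s<..<1} p * g p - indicator {s<..<1} p * f p \<partial>Qm)"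
      unfolding Tl_def d_def by (simp add: right_diff_distrib)
    also have "\<dots> = Tl g s - Tl f s" unfolding Tl_def
      by (intro Bochner_Integration.integral_diff integrable_ind fi gi)
    finally show ?thesis using tl[OF that] by simp
  qed
  define H where "H p = sg \<phi> (clampM M (f p))" for p
  have Hm: "mono_on {0<..<1} H"
  proof (rule mono_onI)
    fix p p' :: real assume "p \<in> {0<..<1}" "p' \<in> {0<..<1}" "p \<le> p'"
    then have "f p \<le> f p'" by (intro mono_onD[OF fm])
    then have "clampM M (f p) \<le> clampM M (f p')" unfolding clampM_def[OF cvx] by (intro max.mono min.mono) auto
    then show "H p \<le> H p'" unfolding H_def by (rule sg_mono[OF cvx])
  qed
  define B where "B = \<bar>sg \<phi> (- M)\<bar> + \<bar>sg \<phi> M\<bar>"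
  have Hb: "\<bar>H p\<bar> \<le> B" for p
  proof -
    have "sg \<phi> (- M) \<le> H p" "H p \<le> sg \<phi> M"
      unfolding H_def using clamp_range[OF cvx M, of "f p"] by (auto intro: sg_mono[OF cvx])
    then show ?thesis by (auto simp: B_def)
  qed
  have Hmeas[measurable]: "H \<in> borel_measurable Qm" unfolding H_def clampM_def[OF cvx] by measurable
  have 0: "0 \<le> (\<integral>p. H p * d p \<partial>Qm)"
    by (rule monotone_weight[OF di d0 dtl Hm]) (use Hb in auto)
  have iHd: "integrable Qm (\<lambda>p. H p * d p)"
  proof (rule Bochner_Integration.integrable_bound)
    show "integrable Qm (\<lambda>p. B * \<bar>d p\<bar>)" using di by auto
    show "(\<lambda>p. H p * d p) \<in> borel_measurable Qm" using borel_measurable_integrable[OF di] by measurable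
    show "AE p in Qm. norm (H p * d p) \<le> norm (B * \<bar>d p\<bar>)"
    proof (intro AE_I2)
      fix p
      have "\<bar>H p\<bar> * \<bar>d p\<bar> \<le> B * \<bar>d p\<bar>" using Hb[of p] by (intro mult_right_mono) auto
      moreover have "0 \<le> B" using Hb[of p] by linarith
      ultimately show "norm (H p * d p) \<le> norm (B * \<bar>d p\<bar>)" by (simp add: abs_mult)
    qed
  qed
  have "(\<integral>p. phiM \<phi> M (f p) \<partial>Qm) \<le> (\<integral>p. phiM \<phi> M (f p) \<partial>Qm) + (\<integral>p. H p * d p \<partial>Qm)"
    using 0 by simp
  also have "\<dots> = (\<integral>p. phiM \<phi> M (f p) + H p * d p \<partial>Qm)"
    by (intro Bochner_Integration.integral_add[symmetric] integrable_phiM[OF cvx M fi] iHd)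
  also have "\<dots> \<le> (\<integral>p. phiM \<phi> M (g p) \<partial>Qm)"
  proof (rule integral_mono)
    show "integrable Qm (\<lambda>p. phiM \<phi> M (f p) + H p * d p)"
      by (intro Bochner_Integration.integrable_add integrable_phiM[OF cvx M fi] iHd)
    show "integrable Qm (\<lambda>p. phiM \<phi> M (g p))" by (rule integrable_phiM[OF cvx M gi])
    fix p show "phiM \<phi> M (f p) + H p * d p \<le> phiM \<phi> M (g p)"
      using phiM_sub[OF cvx M, of "f p" "g p"] by (simp add: H_def d_def)
  qed
  finally show ?thesis .
qed

lemma decomp:
  fixes u v w :: "real \<Rightarrow> real"
  assumes um[measurable]: "u \<in> borel_measurable Qm" and vi: "integrable Qm v"
    and wm[measurable]: "w \<in> borel_measurable Qm"
    and uvw: "\<And>p. p \<in> space Qm \<Longrightarrow> u p = v p + w p" and w0: "\<And>p. p \<in> space Qm \<Longrightarrow> 0 \<le> w p"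
  shows "enn2ereal (\<integral>\<^sup>+p. ennreal (max (u p) 0) \<partial>Qm) - enn2ereal (\<integral>\<^sup>+p. ennreal (max (- u p) 0) \<partial>Qm)
       = enn2ereal (\<integral>\<^sup>+p. ennreal (w p) \<partial>Qm) + ereal (\<integral>p. v p \<partial>Qm)"
proof -
  note vm[measurable] = borel_measurable_integrable[OF vi]
  have vabs: "(\<integral>\<^sup>+p. ennreal \<bar>v p\<bar> \<partial>Qm) = ennreal (\<integral>p. \<bar>v p\<bar> \<partial>Qm)"
    using vi by (intro nn_integral_eq_integral) auto
  have "(\<integral>\<^sup>+p. ennreal (max (- u p) 0) \<partial>Qm) \<le> (\<integral>\<^sup>+p. ennreal \<bar>v p\<bar> \<partial>Qm)"
  proof (intro nn_integral_mono ennreal_leI)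
    fix p assume p: "p \<in> space Qm"
    show "max (- u p) 0 \<le> \<bar>v p\<bar>"
      using uvw[OF p] w0[OF p] abs_ge_minus_self[of "v p"] abs_ge_zero[of "v p"] by (simp add: max_def)
  qed
  then have Bfin: "(\<integral>\<^sup>+p. ennreal (max (- u p) 0) \<partial>Qm) \<noteq> \<top>" unfolding vabs
    using ennreal_neq_top neq_top_trans by blast
  then obtain b where b: "(\<integral>\<^sup>+p. ennreal (max (- u p) 0) \<partial>Qm) = ennreal b" "0 \<le> b"
    by (cases "(\<integral>\<^sup>+p. ennreal (max (- u p) 0) \<partial>Qm)") auto
  show ?thesis
  proof (cases "(\<integral>\<^sup>+p. ennreal (w p) \<partial>Qm) = \<top>")
    case True
    have "(\<integral>\<^sup>+p. ennreal (w p) \<partial>Qm) \<le> (\<integral>\<^sup>+p. ennreal (max (u p) 0) + ennreal \<bar>v p\<bar> \<partial>Qm)"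
    proof (intro nn_integral_mono)
      fix p assume p: "p \<in> space Qm"
      have "ennreal (w p) \<le> ennreal (max (u p) 0 + \<bar>v p\<bar>)" using uvw[OF p] by (intro ennreal_leI) auto
      also have "\<dots> = ennreal (max (u p) 0) + ennreal \<bar>v p\<bar>" by (intro ennreal_plus) auto
      finally show "ennreal (w p) \<le> ennreal (max (u p) 0) + ennreal \<bar>v p\<bar>" .
    qed
    also have "\<dots> = (\<integral>\<^sup>+p. ennreal (max (u p) 0) \<partial>Qm) + ennreal (\<integral>p. \<bar>v p\<bar> \<partial>Qm)"
      unfolding vabs[symmetric] by (rule nn_integral_add) auto
    finally have "(\<integral>\<^sup>+p. ennreal (max (u p) 0) \<partial>Qm) = \<top>" using True by (auto simp: top_unique)
    then show ?thesis using True b by simp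
  next
    case False
    then obtain wv where wv: "(\<integral>\<^sup>+p. ennreal (w p) \<partial>Qm) = ennreal wv" "0 \<le> wv"
      by (cases "(\<integral>\<^sup>+p. ennreal (w p) \<partial>Qm)") auto
    have wi: "integrable Qm w" by (rule integrableI_nn_integral_finite[OF wm _ wv(1)]) (use w0 in auto)
    have ui: "integrable Qm u"
      using Bochner_Integration.integrable_add[OF vi wi]
      by (subst Bochner_Integration.integrable_cong[OF refl uvw]) auto
    have A: "(\<integral>\<^sup>+p. ennreal (max (u p) 0) \<partial>Qm) = ennreal (\<integral>p. max (u p) 0 \<partial>Qm)"
      using ui by (intro nn_integral_eq_integral) auto
    have Bn: "(\<integral>\<^sup>+p. ennreal (max (- u p) 0) \<partial>Qm) = ennreal (\<integral>p. max (- u p) 0 \<partial>Qm)"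
      using ui by (intro nn_integral_eq_integral) auto
    have W: "(\<integral>\<^sup>+p. ennreal (w p) \<partial>Qm) = ennreal (\<integral>p. w p \<partial>Qm)"
      using wi w0 by (intro nn_integral_eq_integral) auto
    have n1: "0 \<le> (\<integral>p. max (u p) 0 \<partial>Qm)" "0 \<le> (\<integral>p. max (- u p) 0 \<partial>Qm)" "0 \<le> (\<integral>p. w p \<partial>Qm)"
      using w0 by (auto intro!: integral_nonneg_AE AE_I2)
    have "(\<integral>p. max (u p) 0 \<partial>Qm) - (\<integral>p. max (- u p) 0 \<partial>Qm) = (\<integral>p. max (u p) 0 - max (- u p) 0 \<partial>Qm)"
      using ui by (intro Bochner_Integration.integral_diff[symmetric]) auto
    also have "\<dots> = (\<integral>p. v p + w p \<partial>Qm)"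
      by (intro Bochner_Integration.integral_cong refl) (auto simp: uvw max_def)
    also have "\<dots> = (\<integral>p. v p \<partial>Qm) + (\<integral>p. w p \<partial>Qm)"
      by (intro Bochner_Integration.integral_add vi wi)
    finally have eq: "(\<integral>p. max (u p) 0 \<partial>Qm) - (\<integral>p. max (- u p) 0 \<partial>Qm) = (\<integral>p. v p \<partial>Qm) + (\<integral>p. w p \<partial>Qm)" .
    show ?thesis unfolding A Bn W using n1 eq by simp
  qed
qed

lemma convex_main:
  assumes cvx: "convex_on UNIV \<phi>" and fi: "integrable Qm f" and gi: "integrable Qm g"
    and fm: "mono_on {0<..<1} f" and mean: "(\<integral>p. f p \<partial>Qm) = (\<integral>p. g p \<partial>Qm)"
    and tl: "\<And>s. 0 < s \<Longrightarrow> s < 1 \<Longrightarrow> Tl f s \<le> Tl g s"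
  shows "enn2ereal (\<integral>\<^sup>+p. ennreal (max (\<phi> (f p)) 0) \<partial>Qm) - enn2ereal (\<integral>\<^sup>+p. ennreal (max (- \<phi> (f p)) 0) \<partial>Qm)
      \<le> enn2ereal (\<integral>\<^sup>+p. ennreal (max (\<phi> (g p)) 0) \<partial>Qm) - enn2ereal (\<integral>\<^sup>+p. ennreal (max (- \<phi> (g p)) 0) \<partial>Qm)"
proof -
  interpret Q: prob_space Qm by (rule prob_Qm)
  note phm[measurable] = phi_meas[OF cvx]
  note sgm[measurable] = sg_meas[OF cvx]
  define l where "l y = \<phi> 0 + sg \<phi> 0 * y" for y
  have dec: "enn2ereal (\<integral>\<^sup>+p. ennreal (max (\<phi> (h p)) 0) \<partial>Qm) - enn2ereal (\<integral>\<^sup>+p. ennreal (max (- \<phi> (h p)) 0) \<partial>Qm)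
      = enn2ereal (\<integral>\<^sup>+p. ennreal (\<phi> (h p) - l (h p)) \<partial>Qm) + ereal (\<integral>p. l (h p) \<partial>Qm)"
    if hi: "integrable Qm h" for h
  proof (rule decomp)
    note hm[measurable] = borel_measurable_integrable[OF hi]
    show "(\<lambda>p. \<phi> (h p)) \<in> borel_measurable Qm" by measurable
    show "integrable Qm (\<lambda>p. l (h p))" unfolding l_def using hi by auto
    show "(\<lambda>p. \<phi> (h p) - l (h p)) \<in> borel_measurable Qm" unfolding l_def by measurable
    fix p show "\<phi> (h p) = l (h p) + (\<phi> (h p) - l (h p))" by simp
    show "0 \<le> \<phi> (h p) - l (h p)" using tangent[OF cvx, of 0 "h p"] by (simp add: l_def)
  qed
  have lint: "(\<integral>p. l (h p) \<partial>Qm) = \<phi> 0 + sg \<phi> 0 * (\<integral>p. h p \<partial>Qm)" if hi: "integrable Qm h" for h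
  proof -
    have "measure Qm {0<..<1} = 1" using Q.prob_space by simp
    then show ?thesis unfolding l_def using hi by simp
  qed
  have SUPeq: "(\<integral>\<^sup>+p. ennreal (\<phi> (h p) - l (h p)) \<partial>Qm)
      = (SUP m. (\<integral>\<^sup>+p. ennreal (phiM \<phi> (real m) (h p) - l (h p)) \<partial>Qm))" if hi: "integrable Qm h" for h
  proof -
    note hm[measurable] = borel_measurable_integrable[OF hi]
    note pm[measurable] = phiM_meas[OF cvx]
    have pw: "ennreal (\<phi> y - l y) = (SUP m. ennreal (phiM \<phi> (real m) y - l y))" for y
    proof (rule antisym)
      obtain m :: nat where m: "\<bar>y\<bar> \<le> real m" using real_arch_simple by blast
      show "ennreal (\<phi> y - l y) \<le> (SUP m. ennreal (phiM \<phi> (real m) y - l y))"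
        by (rule SUP_upper2[of m]) (use phiM_eq[OF cvx m] in simp_all)
      show "(SUP m. ennreal (phiM \<phi> (real m) y - l y)) \<le> ennreal (\<phi> y - l y)"
        by (rule SUP_least) (use phiM_le[OF cvx] in \<open>auto intro: ennreal_leI\<close>)
    qed
    have "(\<integral>\<^sup>+p. ennreal (\<phi> (h p) - l (h p)) \<partial>Qm) = (\<integral>\<^sup>+p. (SUP m. ennreal (phiM \<phi> (real m) (h p) - l (h p))) \<partial>Qm)"
      by (simp add: pw)
    also have "\<dots> = (SUP m. (\<integral>\<^sup>+p. ennreal (phiM \<phi> (real m) (h p) - l (h p)) \<partial>Qm))"
    proof (rule nn_integral_monotone_convergence_SUP)
      show "incseq (\<lambda>m p. ennreal (phiM \<phi> (real m) (h p) - l (h p)))"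
        by (auto simp: incseq_def le_fun_def intro!: ennreal_leI phiM_mono[OF cvx])
      show "\<And>m. (\<lambda>p. ennreal (phiM \<phi> (real m) (h p) - l (h p))) \<in> borel_measurable Qm"
        unfolding l_def by measurable
    qed
    finally show ?thesis .
  qed
  have toR: "(\<integral>\<^sup>+p. ennreal (phiM \<phi> (real m) (h p) - l (h p)) \<partial>Qm)
      = ennreal ((\<integral>p. phiM \<phi> (real m) (h p) \<partial>Qm) - (\<integral>p. l (h p) \<partial>Qm))" if hi: "integrable Qm h" for h m
  proof -
    have i1: "integrable Qm (\<lambda>p. phiM \<phi> (real m) (h p))" by (rule integrable_phiM[OF cvx _ hi]) simp
    have i2: "integrable Qm (\<lambda>p. l (h p))" unfolding l_def using hi by auto
    have "(\<integral>\<^sup>+p. ennreal (phiM \<phi> (real m) (h p) - l (h p)) \<partial>Qm) = ennreal (\<integral>p. phiM \<phi> (real m) (h p) - l (h p) \<partial>Qm)"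
      using i1 i2 phiM_lower[OF cvx, of "real m"] by (intro nn_integral_eq_integral) (auto simp: l_def)
    also have "(\<integral>p. phiM \<phi> (real m) (h p) - l (h p) \<partial>Qm) = (\<integral>p. phiM \<phi> (real m) (h p) \<partial>Qm) - (\<integral>p. l (h p) \<partial>Qm)"
      by (rule Bochner_Integration.integral_diff[OF i1 i2])
    finally show ?thesis .
  qed
  have lm: "(\<integral>p. l (f p) \<partial>Qm) = (\<integral>p. l (g p) \<partial>Qm)" using lint[OF fi] lint[OF gi] mean by simp
  have "(\<integral>\<^sup>+p. ennreal (\<phi> (f p) - l (f p)) \<partial>Qm) \<le> (\<integral>\<^sup>+p. ennreal (\<phi> (g p) - l (g p)) \<partial>Qm)"
    unfolding SUPeq[OF fi] SUPeq[OF gi]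
  proof (rule SUP_mono)
    fix m show "\<exists>m'\<in>UNIV. (\<integral>\<^sup>+p. ennreal (phiM \<phi> (real m) (f p) - l (f p)) \<partial>Qm)
        \<le> (\<integral>\<^sup>+p. ennreal (phiM \<phi> (real m') (g p) - l (g p)) \<partial>Qm)"
      unfolding toR[OF fi] toR[OF gi] lm
      using phiM_ineq[OF cvx _ fi gi fm mean tl, of "real m"]
      by (intro bexI[of _ m] ennreal_leI) auto
  qed
  then have "enn2ereal (\<integral>\<^sup>+p. ennreal (\<phi> (f p) - l (f p)) \<partial>Qm) + ereal (\<integral>p. l (f p) \<partial>Qm)
      \<le> enn2ereal (\<integral>\<^sup>+p. ennreal (\<phi> (g p) - l (g p)) \<partial>Qm) + ereal (\<integral>p. l (g p) \<partial>Qm)"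
    unfolding lm by (intro add_right_mono) (simp add: less_eq_ennreal.rep_eq[symmetric])
  then show ?thesis unfolding dec[OF fi] dec[OF gi] .
qed

lemma cdf_integral_comon:
  assumes F: "\<forall>i<n. is_cdf (F i)" and cvx: "convex_on UNIV \<phi>"
  shows "cdf_integral (comon_sum n F) \<phi>
    = enn2ereal (\<integral>\<^sup>+p. ennreal (max (\<phi> (\<Sum>i<n. quantile (F i) p)) 0) \<partial>Qm)
      - enn2ereal (\<integral>\<^sup>+p. ennreal (max (- \<phi> (\<Sum>i<n. quantile (F i) p)) 0) \<partial>Qm)"
proof -
  note phm[measurable] = phi_meas[OF cvx]
  have C: "is_cdf (comon_sum n F)" and Cq: "\<And>p. p \<in> {0<..<1} \<Longrightarrow> quantile (comon_sum n F) p = (\<Sum>i<n. quantile (F i) p)"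
    using comon_sum_char[OF F] by auto
  have qm: "quantile (comon_sum n F) \<in> measurable Qm borel" by (rule quantile_meas[OF C])
  have e: "(\<integral>\<^sup>+x. ennreal (\<psi> x) \<partial>cdf_measure (comon_sum n F)) = (\<integral>\<^sup>+p. ennreal (\<psi> (\<Sum>i<n. quantile (F i) p)) \<partial>Qm)"
    if [measurable]: "\<psi> \<in> borel_measurable borel" for \<psi>
  proof -
    have "(\<integral>\<^sup>+x. ennreal (\<psi> x) \<partial>cdf_measure (comon_sum n F)) = (\<integral>\<^sup>+p. ennreal (\<psi> (quantile (comon_sum n F) p)) \<partial>Qm)"
      unfolding quantile_transform[OF C] by (rule nn_integral_distr[OF qm]) simp
    also have "\<dots> = (\<integral>\<^sup>+p. ennreal (\<psi> (\<Sum>i<n. quantile (F i) p)) \<partial>Qm)"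
      by (intro nn_integral_cong) (simp add: Cq)
    finally show ?thesis .
  qed
  have m1: "(\<lambda>x. max (\<phi> x) 0) \<in> borel_measurable borel" by measurable
  have m2: "(\<lambda>x. max (- \<phi> x) 0) \<in> borel_measurable borel" by measurable
  show ?thesis unfolding cdf_integral_def using e[OF m1] e[OF m2] by simp
qed

theorem theorem6:
  fixes n :: nat and F :: "nat \<Rightarrow> real \<Rightarrow> real" and L :: "nat \<Rightarrow> nat \<Rightarrow> real"
  assumes "\<forall>i<n. F i \<in> M1"
    and "doubly_stochastic n L"
  shows "CF n F \<subseteq> CF n (mat_mix n L F)"
proof
  fix G assume "G \<in> CF n F"
  then have GM: "G \<in> M1" and cx: "cx_le G (comon_sum n F)" by (auto simp: CF_def)
  have Fc: "\<forall>j<n. is_cdf (F j)" using assms(1) by (auto simp: M1_def)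
  have Lnn: "\<And>i j. i < n \<Longrightarrow> j < n \<Longrightarrow> 0 \<le> L i j" and Lr: "\<And>i. i < n \<Longrightarrow> (\<Sum>j<n. L i j) = 1"
    using assms(2) by (auto simp: doubly_stochastic_def)
  have Hc: "\<forall>i<n. is_cdf (mat_mix n L F i)"
  proof (intro allI impI)
    fix i assume i: "i < n"
    have "mat_mix n L F i = (\<lambda>x. \<Sum>j<n. L i j * F j x)" by (simp add: mat_mix_def)
    then show "is_cdf (mat_mix n L F i)" using mix_cdf[OF Fc, of "L i"] Lnn[OF i] Lr[OF i] by auto
  qed
  note maj = majorization[OF assms(1,2)]
  have fm: "mono_on {0<..<1} (\<lambda>p. \<Sum>j<n. quantile (F j) p)"
    using Fc by (intro mono_onI sum_mono) (auto intro: quantile_mono)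
  have "cx_le G (comon_sum n (mat_mix n L F))"
    unfolding cx_le_def
  proof (intro allI impI)
    fix \<phi> :: "real \<Rightarrow> real" assume cvx: "convex_on UNIV \<phi>"
    have "cdf_integral G \<phi> \<le> cdf_integral (comon_sum n F) \<phi>" using cx cvx by (auto simp: cx_le_def)
    also have "\<dots> \<le> cdf_integral (comon_sum n (mat_mix n L F)) \<phi>"
      unfolding cdf_integral_comon[OF Fc cvx] cdf_integral_comon[OF Hc cvx]
      by (rule convex_main[OF cvx maj(1,2) fm maj(3) maj(4)])
    finally show "cdf_integral G \<phi> \<le> cdf_integral (comon_sum n (mat_mix n L F)) \<phi>" .
  qed
  then show "G \<in> CF n (mat_mix n L F)" using GM by (simp add: CF_def)
qed

end
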